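(* Let $U_0$, $T(s)$, $A$, $U_l$, $\|\cdot\|_l$, $\varepsilon_0$, $u_0$, $F$, $\mathcal{F}$ be as in the context, satisfying (A1)–(A4). Then for every nonnegative integer $l$ there exists $c_l>0$ such that for all $\lambda\in[-\varepsilon_0,\varepsilon_0]$ and all $f\in U_l$ it holds $\partial_uF(\lambda,u_0)^{-1}f\in U_l$ and $\|\partial_uF(\lambda,u_0)^{-1}f\|_l\le c_l\|f\|_l$.
   Context: $U_0$ is a real Banach space with norm $\|\cdot\|_0$, $\{T(s)\}_{s\in\mathbb{R}}$ a strongly continuous group of bounded linear operators on $U_0$ with generator $A$, $U_l:=D(A^l)=\{u\in U_0: T(\cdot)u\in C^l(\mathbb{R};U_0)\}$ with norm $\|u\|_l:=\sum_{k=0}^l\|A^ku\|_0$. $\varepsilon_0>0$, $u_0\in U_0$, $F:[-\varepsilon_0,\varepsilon_0]\times U_0\to U_0$ with $F(0,u_0)=0$, and $\mathcal{F}(\lambda,s,u):=T(s)F(\lambda,T(-s)u)$. Assumptions: (A1) for every $\lambda$, $(s,u)\mapsto\mathcal{F}(\lambda,s,u)$ is in $C^\infty(\mathbb{R}\times U_0;U_0)$, with partial derivatives $\partial_s^k\partial_u^j\mathcal{F}$; $\partial_u^jF(\lambda,u):=\partial_u^j\mathcal{F}(\lambda,0,u)$. (A2) for all $j,k,l\ge0$ and $u,u_1,\dots,u_j\in U_l$, $\lambda\mapsto\partial_s^k\partial_u^j\mathcal{F}(\lambda,0,u)(u_1,\dots,u_j)$ is in $C^l([-\varepsilon_0,\varepsilon_0];U_0)$;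 its $l$-th derivative is written $\partial_\lambda^l\partial_s^k\partial_u^j\mathcal{F}(\lambda,0,u)(u_1,\dots,u_j)$. (A3) for all $j,k,l\ge0$ there is $c_{jkl}>0$ with $\|\partial_\lambda^l\partial_s^k\partial_u^j\mathcal{F}(\lambda,0,u)(u_1,\dots,u_j)\|_0\le c_{jkl}\|u_1\|_l\cdots\|u_j\|_l$ for all $\lambda\in[-\varepsilon_0,\varepsilon_0]$, $u,u_i\in U_l$, $\|u-u_0\|_l\le1$. (A4) there is $c_0>0$ such that for all $\lambda\in[-\varepsilon_0,\varepsilon_0]$, $\partial_uF(\lambda,u_0)$ is Fredholm of index zero $U_0\to U_0$ and $\|\partial_uF(\lambda,u_0)u\|_0\ge c_0\|u\|_0$ for all $u\in U_0$ (so $\partial_uF(\lambda,u_0)$ is invertible on $U_0$). *)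

theory Defs
  imports "HOL-Analysis.Analysis"
begin

definition sc_group :: "(real \<Rightarrow> 'a::banach \<Rightarrow> 'a) \<Rightarrow> bool" where
  "sc_group T \<longleftrightarrow> (\<forall>s. bounded_linear (T s)) \<and> T 0 = id \<and>
     (\<forall>s t. T (s + t) = T s \<circ> T t) \<and> (\<forall>u. continuous_on UNIV (\<lambda>s. T s u))"

text \<open>Generator A u = d/ds T(s)u at s = 0 (meaningful on D(A)).\<close>
definition gen :: "(real \<Rightarrow> 'a::banach \<Rightarrow> 'a) \<Rightarrow> 'a \<Rightarrow> 'a" where
  "gen T u = vector_derivative (\<lambda>s. T s u) (at 0)"

text \<open>U_l = D(A^l).\<close>
fun Ul :: "(real \<Rightarrow> 'a::banach \<Rightarrow> 'a) \<Rightarrow> nat \<Rightarrow> 'a set" where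
  "Ul T 0 = UNIV"
| "Ul T (Suc l) = {u \<in> Ul T l. (\<lambda>s. T s ((gen T ^^ l) u)) differentiable (at 0)}"

definition norm_l :: "(real \<Rightarrow> 'a::banach \<Rightarrow> 'a) \<Rightarrow> nat \<Rightarrow> 'a \<Rightarrow> real" where
  "norm_l T l u = (\<Sum>k\<le>l. norm ((gen T ^^ k) u))"

definition mlin_bounded :: "nat \<Rightarrow> ('v::real_normed_vector list \<Rightarrow> 'w::real_normed_vector) \<Rightarrow> bool" where
  "mlin_bounded n M \<longleftrightarrow>
     (\<forall>i<n. \<forall>hs x y c. length hs = n \<longrightarrow>
        M (hs[i := x + y]) = M (hs[i := x]) + M (hs[i := y]) \<and>
        M (hs[i := c *\<^sub>R x]) = c *\<^sub>R M (hs[i := x])) \<and>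
     (\<exists>K. \<forall>hs. length hs = n \<longrightarrow> norm (M hs) \<le> K * (\<Prod>h\<leftarrow>hs. norm h))"

text \<open>D is the tower of Frechet derivatives of f (D n x is the n-th derivative at x,
  a bounded n-linear map) and each D n is Frechet differentiable with derivative
  D (Suc n), the remainder being small in operator norm.\<close>
definition Cinf_tower :: "('v::real_normed_vector \<Rightarrow> 'w::real_normed_vector) \<Rightarrow>
     (nat \<Rightarrow> 'v \<Rightarrow> 'v list \<Rightarrow> 'w) \<Rightarrow> bool" where
  "Cinf_tower f D \<longleftrightarrow>
     (\<forall>x. D 0 x [] = f x) \<and>
     (\<forall>n x. mlin_bounded n (D n x)) \<and>
     (\<forall>n x e. e > 0 \<longrightarrow> (\<exists>d>0. \<forall>y. norm (y - x) < d \<longrightarrow>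
        (\<forall>hs. length hs = n \<longrightarrow>
           norm (D n y hs - D n x hs - D (Suc n) x ((y - x) # hs))
             \<le> e * norm (y - x) * (\<Prod>h\<leftarrow>hs. norm h))))"

definition Cinf :: "('v::real_normed_vector \<Rightarrow> 'w::real_normed_vector) \<Rightarrow> bool" where
  "Cinf f \<longleftrightarrow> (\<exists>D. Cinf_tower f D)"

text \<open>Partial derivative d_s^k d_u^j of a map on R x U0, read off from the full derivative:
  pd D k j (s,u) us = D^(k+j)(s,u)[(1,0)^k, (0,u_1), ..., (0,u_j)].\<close>
definition pd :: "(nat \<Rightarrow> real \<times> 'a \<Rightarrow> (real \<times> 'a) list \<Rightarrow> 'b) \<Rightarrow> nat \<Rightarrow> nat \<Rightarrow>
     real \<Rightarrow> 'a::real_normed_vector \<Rightarrow> 'a list \<Rightarrow> 'b" where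
  "pd D k j s u us = D (k + j) (s, u) (replicate k (1, 0) @ map (\<lambda>v. (0, v)) us)"

fun Ck_on :: "real set \<Rightarrow> nat \<Rightarrow> (real \<Rightarrow> 'a::real_normed_vector) \<Rightarrow> bool" where
  "Ck_on S 0 g = continuous_on S g"
| "Ck_on S (Suc l) g =
     ((\<forall>t\<in>S. (g has_vector_derivative vector_derivative g (at t within S)) (at t within S)) \<and>
      Ck_on S l (\<lambda>t. vector_derivative g (at t within S)))"

definition lderiv :: "real set \<Rightarrow> nat \<Rightarrow> (real \<Rightarrow> 'a::real_normed_vector) \<Rightarrow> real \<Rightarrow> 'a" where
  "lderiv S l g = ((\<lambda>h t. vector_derivative h (at t within S)) ^^ l) g"

definition fredholm_index0 :: "('a::real_normed_vector \<Rightarrow> 'a) \<Rightarrow> bool" where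
  "fredholm_index0 L \<longleftrightarrow> bounded_linear L \<and> closed (range L) \<and>
     (\<exists>B C. finite B \<and> independent B \<and> span B = {x. L x = 0} \<and>
            finite C \<and> independent C \<and> card C = card B \<and>
            range L \<inter> span C = {0} \<and>
            {x + y |x y. x \<in> range L \<and> y \<in> span C} = UNIV)"

end

theory Submission
  imports Defs "HOL-Analysis.Analysis"
begin

lemma vderiv_quotientI:
  fixes f :: "real \<Rightarrow> 'b::real_normed_vector"
  assumes "((\<lambda>y. (f y - f x) /\<^sub>R (y - x)) \<longlongrightarrow> D) (at x)"
  shows "(f has_vector_derivative D) (at x)"
proof -
  have lim: "((\<lambda>y. (f y - f x) /\<^sub>R (y - x) - D) \<longlongrightarrow> 0) (at x)"
    using tendsto_diff[OF assms tendsto_const[of D]] by simp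
  have "((\<lambda>y. norm ((f y - f x) - (y - x) *\<^sub>R D) / norm (y - x)) \<longlongrightarrow> 0) (at x)"
  proof (rule Lim_transform_eventually[OF tendsto_norm[OF lim, simplified]])
    show "\<forall>\<^sub>F y in at x. norm ((f y - f x) /\<^sub>R (y - x) - D) =
        norm ((f y - f x) - (y - x) *\<^sub>R D) / norm (y - x)"
      unfolding eventually_at_filter
    proof (intro always_eventually allI impI)
      fix y assume "y \<noteq> x"
      then have "(f y - f x) - (y - x) *\<^sub>R D = (y - x) *\<^sub>R ((f y - f x) /\<^sub>R (y - x) - D)"
        by (simp add: scaleR_right_diff_distrib)
      then show "norm ((f y - f x) /\<^sub>R (y - x) - D) = norm ((f y - f x) - (y - x) *\<^sub>R D) / norm (y - x)"
        using \<open>y \<noteq> x\<close> by simp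
    qed
  qed
  then show ?thesis
    unfolding has_vector_derivative_def has_derivative_iff_norm
    by (auto intro: bounded_linear_scaleR_left)
qed

lemma vderiv_quotientD:
  fixes f :: "real \<Rightarrow> 'b::real_normed_vector"
  assumes "(f has_vector_derivative D) (at x)"
  shows "((\<lambda>y. (f y - f x) /\<^sub>R (y - x)) \<longlongrightarrow> D) (at x)"
proof -
  have "((\<lambda>y. norm ((f y - f x) - (y - x) *\<^sub>R D) / norm (y - x)) \<longlongrightarrow> 0) (at x)"
    using assms unfolding has_vector_derivative_def has_derivative_iff_norm by auto
  then have "((\<lambda>y. norm ((f y - f x) /\<^sub>R (y - x) - D)) \<longlongrightarrow> 0) (at x)"
  proof (rule Lim_transform_eventually)
    show "\<forall>\<^sub>F y in at x. norm ((f y - f x) - (y - x) *\<^sub>R D) / norm (y - x) =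
        norm ((f y - f x) /\<^sub>R (y - x) - D)"
      unfolding eventually_at_filter
    proof (intro always_eventually allI impI)
      fix y assume "y \<noteq> x"
      then have "(f y - f x) - (y - x) *\<^sub>R D = (y - x) *\<^sub>R ((f y - f x) /\<^sub>R (y - x) - D)"
        by (simp add: scaleR_right_diff_distrib)
      then show "norm ((f y - f x) - (y - x) *\<^sub>R D) / norm (y - x) = norm ((f y - f x) /\<^sub>R (y - x) - D)"
        using \<open>y \<noteq> x\<close> by simp
    qed
  qed
  then have "((\<lambda>y. (f y - f x) /\<^sub>R (y - x) - D) \<longlongrightarrow> 0) (at x)"
    by (rule tendsto_norm_zero_cancel)
  from tendsto_add[OF this tendsto_const[of D]] show ?thesis by simp
qed

section \<open>Multilinear maps\<close>

lemma mlin_add: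
  assumes "mlin_bounded n M" "i < n" "length hs = n"
  shows "M (hs[i := x + y]) = M (hs[i := x]) + M (hs[i := y])"
  using assms unfolding mlin_bounded_def by blast

lemma mlin_scale:
  assumes "mlin_bounded n M" "i < n" "length hs = n"
  shows "M (hs[i := c *\<^sub>R x]) = c *\<^sub>R M (hs[i := x])"
  using assms unfolding mlin_bounded_def by blast

lemma mlin_bound:
  assumes "mlin_bounded n M"
  obtains K where "K \<ge> 0" "\<And>hs. length hs = n \<Longrightarrow> norm (M hs) \<le> K * (\<Prod>h\<leftarrow>hs. norm h)"
proof -
  obtain K where K: "\<And>hs. length hs = n \<Longrightarrow> norm (M hs) \<le> K * (\<Prod>h\<leftarrow>hs. norm h)"
    using assms unfolding mlin_bounded_def by blast
  show ?thesis
  proof (rule that[of "max K 0"])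
    fix hs :: "'a list" assume "length hs = n"
    have "0 \<le> (\<Prod>h\<leftarrow>hs. norm h)" by (rule prod_list_nonneg) auto
    then have "K * (\<Prod>h\<leftarrow>hs. norm h) \<le> max K 0 * (\<Prod>h\<leftarrow>hs. norm h)"
      by (intro mult_right_mono) auto
    with K[OF \<open>length hs = n\<close>] show "norm (M hs) \<le> max K 0 * (\<Prod>h\<leftarrow>hs. norm h)" by linarith
  qed auto
qed

lemma mlin_cons:
  assumes "mlin_bounded (Suc n) M"
  shows "mlin_bounded n (\<lambda>t. M (h # t))"
proof -
  obtain K where K: "K \<ge> 0" "\<And>hs. length hs = Suc n \<Longrightarrow> norm (M hs) \<le> K * (\<Prod>h\<leftarrow>hs. norm h)"
    using mlin_bound[OF assms] by blast
  show ?thesis unfolding mlin_bounded_def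
  proof (intro conjI allI impI)
    fix i hs x y c assume "i < n" "length (hs::'a list) = n"
    then show "M (h # hs[i := x + y]) = M (h # hs[i := x]) + M (h # hs[i := y])"
      and "M (h # hs[i := c *\<^sub>R x]) = c *\<^sub>R M (h # hs[i := x])"
      using mlin_add[OF assms, of "Suc i" "h # hs"] mlin_scale[OF assms, of "Suc i" "h # hs"] by auto
  next
    show "\<exists>K. \<forall>hs. length hs = n \<longrightarrow> norm (M (h # hs)) \<le> K * (\<Prod>h\<leftarrow>hs. norm h)"
      proof (rule exI[of _ "K * norm h"], intro allI impI)
      fix hs :: "'a list" assume "length hs = n"
      then show "norm (M (h # hs)) \<le> K * norm h * (\<Prod>h\<leftarrow>hs. norm h)"
        using K(2)[of "h # hs"] by (simp add: ac_simps)
    qed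
  qed
qed

lemma mlin_head_bl:
  assumes "mlin_bounded (Suc n) M" "length t = n"
  shows "bounded_linear (\<lambda>h. M (h # t))"
proof -
  obtain K where K: "K \<ge> 0" "\<And>hs. length hs = Suc n \<Longrightarrow> norm (M hs) \<le> K * (\<Prod>h\<leftarrow>hs. norm h)"
    using mlin_bound[OF assms(1)] by blast
  show ?thesis
  proof (rule bounded_linear_intro[where K = "K * (\<Prod>h\<leftarrow>t. norm h)"])
    fix x y
    show "M ((x + y) # t) = M (x # t) + M (y # t)"
      using mlin_add[OF assms(1), of 0 "0 # t" x y] assms(2) by simp
  next
    fix r x
    show "M ((r *\<^sub>R x) # t) = r *\<^sub>R M (x # t)"
      using mlin_scale[OF assms(1), of 0 "0 # t" r x] assms(2) by simp
  next
    fix x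
    show "norm (M (x # t)) \<le> norm x * (K * (\<Prod>h\<leftarrow>t. norm h))"
      using K(2)[of "x # t"] assms(2) by (simp add: ac_simps)
  qed
qed

lemma mlin_update_bl:
  assumes "mlin_bounded n M" "length hs = n" "i < n"
  shows "bounded_linear (\<lambda>h. M (hs[i := h]))"
proof -
  obtain K where K: "K \<ge> 0" "\<And>hs. length hs = n \<Longrightarrow> norm (M hs) \<le> K * (\<Prod>h\<leftarrow>hs. norm h)"
    using mlin_bound[OF assms(1)] by blast
  define R where "R = (\<Prod>h\<leftarrow>take i hs. norm h) * (\<Prod>h\<leftarrow>drop (Suc i) hs. norm h)"
  have p: "(\<Prod>h\<leftarrow>hs[i := x]. norm h) = norm x * R" for x
  proof -
    have "hs[i := x] = take i hs @ x # drop (Suc i) hs"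
      using assms by (auto simp: upd_conv_take_nth_drop)
    then show ?thesis by (simp add: R_def ac_simps)
  qed
  show ?thesis
  proof (rule bounded_linear_intro[where K = "K * R"])
    fix x y
    show "M (hs[i := x + y]) = M (hs[i := x]) + M (hs[i := y])"
      using mlin_add[OF assms(1,3,2)] by simp
  next
    fix r x
    show "M (hs[i := r *\<^sub>R x]) = r *\<^sub>R M (hs[i := x])"
      using mlin_scale[OF assms(1,3,2)] by simp
  next
    fix x
    show "norm (M (hs[i := x])) \<le> norm x * (K * R)"
      using K(2)[of "hs[i := x]"] assms(2) p[of x] by (simp add: ac_simps)
  qed
qed

lemma mlin_zero:
  assumes "mlin_bounded n M" "length hs = n" "i < n" "hs ! i = 0"
  shows "M hs = 0"
proof -
  have "M (hs[i := 0]) = 0"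
    using bounded_linear.linear[OF mlin_update_bl[OF assms(1-3)]] linear_0 by fastforce
  then show ?thesis using assms(4) by (metis list_update_id)
qed

lemma prod_norm_tendsto:
  fixes hs :: "'b \<Rightarrow> 'a::real_normed_vector list"
  assumes "\<And>s. length (hs s) = n" "length hs0 = n"
    "\<And>i. i < n \<Longrightarrow> ((\<lambda>s. hs s ! i) \<longlongrightarrow> hs0 ! i) F"
  shows "((\<lambda>s. \<Prod>h\<leftarrow>hs s. norm h) \<longlongrightarrow> (\<Prod>h\<leftarrow>hs0. norm h)) F"
  using assms
proof (induction n arbitrary: hs hs0)
  case 0
  then show ?case by simp
next
  case (Suc n)
  define a where "a s = hd (hs s)" for s
  define t where "t s = tl (hs s)" for s
  have hs: "hs s = a s # t s" for s
    using Suc.prems(1)[of s] unfolding a_def t_def by (cases "hs s") auto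
  obtain a0 t0 where hs0: "hs0 = a0 # t0" using Suc.prems(2) by (cases hs0) auto
  have lt: "length (t s) = n" for s using Suc.prems(1)[of s] hs[of s] by simp
  have lt0: "length t0 = n" using Suc.prems(2) hs0 by simp
  have ta: "((\<lambda>s. a s) \<longlongrightarrow> a0) F" using Suc.prems(3)[of 0] hs hs0 by simp
  have tt: "((\<lambda>s. t s ! i) \<longlongrightarrow> t0 ! i) F" if "i < n" for i
    using Suc.prems(3)[of "Suc i"] hs hs0 that by simp
  have "((\<lambda>s. norm (a s) * (\<Prod>h\<leftarrow>t s. norm h)) \<longlongrightarrow> norm a0 * (\<Prod>h\<leftarrow>t0. norm h)) F"
    by (intro tendsto_mult tendsto_norm ta Suc.IH[OF lt lt0 tt])
  then show ?case unfolding hs hs0 by simp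
qed

lemma mlin_tendsto:
  fixes hs :: "'b \<Rightarrow> 'a::real_normed_vector list"
  assumes "mlin_bounded n M" "\<And>s. length (hs s) = n" "length hs0 = n"
    "\<And>i. i < n \<Longrightarrow> ((\<lambda>s. hs s ! i) \<longlongrightarrow> hs0 ! i) F"
  shows "((\<lambda>s. M (hs s)) \<longlongrightarrow> M hs0) F"
  using assms
proof (induction n arbitrary: M hs hs0)
  case 0
  then show ?case by simp
next
  case (Suc n)
  define a where "a s = hd (hs s)" for s
  define t where "t s = tl (hs s)" for s
  have hs: "hs s = a s # t s" for s
    using Suc.prems(2)[of s] unfolding a_def t_def by (cases "hs s") auto
  obtain a0 t0 where hs0: "hs0 = a0 # t0" using Suc.prems(3) by (cases hs0) auto
  have lt: "length (t s) = n" for s using Suc.prems(2)[of s] hs[of s] by simp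
  have lt0: "length t0 = n" using Suc.prems(3) hs0 by simp
  have ta: "((\<lambda>s. a s) \<longlongrightarrow> a0) F" using Suc.prems(4)[of 0] hs hs0 by simp
  have tt: "((\<lambda>s. t s ! i) \<longlongrightarrow> t0 ! i) F" if "i < n" for i
    using Suc.prems(4)[of "Suc i"] hs hs0 that by simp
  obtain K where K: "K \<ge> 0" "\<And>hs. length hs = Suc n \<Longrightarrow> norm (M hs) \<le> K * (\<Prod>h\<leftarrow>hs. norm h)"
    using mlin_bound[OF Suc.prems(1)] by blast
  have split: "M (a s # t s) = M ((a s - a0) # t s) + M (a0 # t s)" for s
    using linear_add[OF bounded_linear.linear[OF mlin_head_bl[OF Suc.prems(1) lt]], of "a s - a0" a0]
    by simp
  have t2: "((\<lambda>s. M (a0 # t s)) \<longlongrightarrow> M (a0 # t0)) F"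
    by (rule Suc.IH[OF mlin_cons[OF Suc.prems(1)] lt lt0 tt])
  have t1: "((\<lambda>s. M ((a s - a0) # t s)) \<longlongrightarrow> 0) F"
  proof (rule Lim_null_comparison)
    show "\<forall>\<^sub>F s in F. norm (M ((a s - a0) # t s)) \<le> K * (norm (a s - a0) * (\<Prod>h\<leftarrow>t s. norm h))"
    proof (intro always_eventually allI)
      fix s show "norm (M ((a s - a0) # t s)) \<le> K * (norm (a s - a0) * (\<Prod>h\<leftarrow>t s. norm h))"
        using K(2)[of "(a s - a0) # t s"] lt[of s] by simp
    qed
    have "((\<lambda>s. K * (norm (a s - a0) * (\<Prod>h\<leftarrow>t s. norm h))) \<longlongrightarrow> K * (norm (a0 - a0) * (\<Prod>h\<leftarrow>t0. norm h))) F"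
      by (intro tendsto_mult tendsto_const tendsto_norm tendsto_diff ta prod_norm_tendsto[OF lt lt0 tt])
    then show "((\<lambda>s. K * (norm (a s - a0) * (\<Prod>h\<leftarrow>t s. norm h))) \<longlongrightarrow> 0) F" by simp
  qed
  show ?case unfolding hs hs0 split
    using tendsto_add[OF t1 t2] by simp
qed

lemma mlin_vderiv:
  fixes hs :: "real \<Rightarrow> 'a::real_normed_vector list"
  assumes "mlin_bounded n M" "\<And>s. length (hs s) = n" "length hs' = n"
    "\<And>i. i < n \<Longrightarrow> ((\<lambda>s. hs s ! i) has_vector_derivative hs' ! i) (at x)"
  shows "((\<lambda>s. M (hs s)) has_vector_derivative (\<Sum>i<n. M ((hs x)[i := hs' ! i]))) (at x)"
  using assms
proof (induction n arbitrary: M hs hs')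
  case 0
  then show ?case by simp
next
  case (Suc n)
  define a where "a s = hd (hs s)" for s
  define t where "t s = tl (hs s)" for s
  have hs: "hs s = a s # t s" for s
    using Suc.prems(2)[of s] unfolding a_def t_def by (cases "hs s") auto
  obtain a' t' where hs': "hs' = a' # t'" using Suc.prems(3) by (cases hs') auto
  have lt: "length (t s) = n" for s using Suc.prems(2)[of s] hs[of s] by simp
  have lt': "length t' = n" using Suc.prems(3) hs' by simp
  have da: "((\<lambda>s. a s) has_vector_derivative a') (at x)" using Suc.prems(4)[of 0] hs hs' by simp
  have dt: "((\<lambda>s. t s ! i) has_vector_derivative t' ! i) (at x)" if "i < n" for i
    using Suc.prems(4)[of "Suc i"] hs hs' that by simp
  have split: "M (a s # t s) = M ((a s - a x) # t s) + M (a x # t s)" for s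
    using linear_add[OF bounded_linear.linear[OF mlin_head_bl[OF Suc.prems(1) lt]], of "a s - a x" "a x"]
    by simp
  have d2: "((\<lambda>s. M (a x # t s)) has_vector_derivative (\<Sum>i<n. M (a x # (t x)[i := t' ! i]))) (at x)"
    by (rule Suc.IH[OF mlin_cons[OF Suc.prems(1)] lt lt' dt])
  have d1: "((\<lambda>s. M ((a s - a x) # t s)) has_vector_derivative M (a' # t x)) (at x)"
  proof (rule vderiv_quotientI)
    have z: "M ((a x - a x) # t x) = 0"
      using mlin_zero[OF Suc.prems(1), of "(a x - a x) # t x" 0] lt by simp
    have q: "(M ((a s - a x) # t s) - M ((a x - a x) # t x)) /\<^sub>R (s - x) =
        M (((a s - a x) /\<^sub>R (s - x)) # t s)" for s
      using z linear_scale[OF bounded_linear.linear[OF mlin_head_bl[OF Suc.prems(1) lt]],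
          of "inverse (s - x)" "a s - a x"] by simp
    have "((\<lambda>s. M (((a s - a x) /\<^sub>R (s - x)) # t s)) \<longlongrightarrow> M (a' # t x)) (at x)"
    proof (rule mlin_tendsto[OF Suc.prems(1)])
      fix i assume "i < Suc n"
      show "((\<lambda>s. (((a s - a x) /\<^sub>R (s - x)) # t s) ! i) \<longlongrightarrow> (a' # t x) ! i) (at x)"
      proof (cases i)
        case 0
        then show ?thesis using vderiv_quotientD[OF da] by simp
      next
        case (Suc j)
        then have "j < n" using \<open>i < Suc n\<close> by simp
        have "isCont (\<lambda>s. t s ! j) x"
          using dt[OF \<open>j < n\<close>] by (rule has_vector_derivative_continuous)
        then show ?thesis using Suc by (simp add: isCont_def)
      qed
    qed (use lt in auto)
    then show "((\<lambda>s. (M ((a s - a x) # t s) - M ((a x - a x) # t x)) /\<^sub>R (s - x)) \<longlongrightarrow> M (a' # t x)) (at x)"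
      unfolding q .
  qed
  have "(\<Sum>i<Suc n. M ((hs x)[i := hs' ! i])) = M (a' # t x) + (\<Sum>i<n. M (a x # (t x)[i := t' ! i]))"
    unfolding sum.lessThan_Suc_shift hs hs' by simp
  then show ?case unfolding hs split
    using has_vector_derivative_add[OF d1 d2] by simp
qed


lemma vmvt:
  fixes \<phi> :: "real \<Rightarrow> 'b::real_normed_vector"
  assumes "\<And>\<tau>. \<tau> \<in> {a..b} \<Longrightarrow> (\<phi> has_vector_derivative \<phi>' \<tau>) (at \<tau>)"
    "\<And>\<tau>. \<tau> \<in> {a..b} \<Longrightarrow> norm (\<phi>' \<tau>) \<le> B" "a \<le> b"
  shows "norm (\<phi> b - \<phi> a) \<le> B * (b - a)"
proof -
  have "norm (\<phi> b - \<phi> a) \<le> B * norm (b - a)"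
  proof (rule differentiable_bound[of "{a..b}" \<phi> "\<lambda>\<tau> h. h *\<^sub>R \<phi>' \<tau>"])
    fix \<tau> assume "\<tau> \<in> {a..b}"
    show "(\<phi> has_derivative (\<lambda>h. h *\<^sub>R \<phi>' \<tau>)) (at \<tau> within {a..b})"
      using assms(1)[OF \<open>\<tau> \<in> {a..b}\<close>] unfolding has_vector_derivative_def
      by (rule has_derivative_at_withinI)
    have "onorm (\<lambda>h::real. h *\<^sub>R \<phi>' \<tau>) = onorm (\<lambda>h::real. h) * norm (\<phi>' \<tau>)"
      by (rule onorm_scaleR_left[OF bounded_linear_ident])
    then show "onorm (\<lambda>h. h *\<^sub>R \<phi>' \<tau>) \<le> B" using assms(2)[OF \<open>\<tau> \<in> {a..b}\<close>] by (simp add: onorm_id)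
  qed (use assms(3) in auto)
  then show ?thesis using assms(3) by simp
qed

section \<open>Towers\<close>

context
  fixes f :: "'v::real_normed_vector \<Rightarrow> 'w::real_normed_vector" and D
  assumes tw: "Cinf_tower f D"
begin

lemma tower_mlin: "mlin_bounded n (D n x)"
  using tw unfolding Cinf_tower_def by blast

lemma tower_0: "D 0 x [] = f x"
  using tw unfolding Cinf_tower_def by blast

lemma tower_rem:
  assumes "e > 0"
  shows "\<exists>d>0. \<forall>y hs. norm (y - x) < d \<longrightarrow> length hs = n \<longrightarrow>
     norm (D n y hs - D n x hs - D (Suc n) x ((y - x) # hs)) \<le> e * norm (y - x) * (\<Prod>h\<leftarrow>hs. norm h)"
  using tw assms unfolding Cinf_tower_def by metis

lemma tower_head_bl: "length hs = n \<Longrightarrow> bounded_linear (\<lambda>h. D (Suc n) x (h # hs))"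
  by (rule mlin_head_bl[OF tower_mlin])

lemma tower_deriv:
  assumes "length hs = n"
  shows "((\<lambda>y. D n y hs) has_derivative (\<lambda>h. D (Suc n) x (h # hs))) (at x)"
  unfolding has_derivative_at_alt
proof (intro conjI allI impI)
  show "bounded_linear (\<lambda>h. D (Suc n) x (h # hs))" by (rule tower_head_bl[OF assms])
next
  fix e :: real assume "e > 0"
  define P where "P = (\<Prod>h\<leftarrow>hs. norm h)"
  have P0: "P \<ge> 0" unfolding P_def by (rule prod_list_nonneg) auto
  have "e / (P + 1) > 0" using \<open>e > 0\<close> P0 by simp
  then obtain d where d: "d > 0" "\<And>y hs. norm (y - x) < d \<Longrightarrow> length hs = n \<Longrightarrow>
     norm (D n y hs - D n x hs - D (Suc n) x ((y - x) # hs)) \<le> e / (P + 1) * norm (y - x) * (\<Prod>h\<leftarrow>hs. norm h)"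
    using tower_rem[of "e / (P + 1)" x n] by blast
  show "\<exists>d>0. \<forall>y. norm (y - x) < d \<longrightarrow> norm (D n y hs - D n x hs - D (Suc n) x ((y - x) # hs)) \<le> e * norm (y - x)"
  proof (intro exI[of _ d] conjI allI impI)
    fix y assume "norm (y - x) < d"
    have "e / (P + 1) * norm (y - x) * P \<le> e * norm (y - x)"
    proof -
      have "e / (P + 1) * P \<le> e" using P0 \<open>e > 0\<close> by (simp add: field_simps)
      then show ?thesis by (metis mult.commute mult.left_commute mult_left_mono norm_ge_zero)
    qed
    then show "norm (D n y hs - D n x hs - D (Suc n) x ((y - x) # hs)) \<le> e * norm (y - x)"
      using d(2)[OF \<open>norm (y - x) < d\<close> assms] unfolding P_def by linarith
  qed (use d in auto)
qed

lemma tower_head_add: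
  "length hs = n \<Longrightarrow> D (Suc n) x ((a + b) # hs) = D (Suc n) x (a # hs) + D (Suc n) x (b # hs)"
  using linear_add[OF bounded_linear.linear[OF tower_head_bl]] by blast

lemma tower_head_scale:
  "length hs = n \<Longrightarrow> D (Suc n) x ((c *\<^sub>R a) # hs) = c *\<^sub>R D (Suc n) x (a # hs)"
  using linear_scale[OF bounded_linear.linear[OF tower_head_bl]] by blast

lemma tower_head_diff:
  "length hs = n \<Longrightarrow> D (Suc n) x ((a - b) # hs) = D (Suc n) x (a # hs) - D (Suc n) x (b # hs)"
  using linear_diff[OF bounded_linear.linear[OF tower_head_bl]] by blast

lemma tower_lip:
  obtains C d where "C \<ge> 0" "d > 0" "\<And>y hs. norm (y - x) < d \<Longrightarrow> length hs = n \<Longrightarrow>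
     norm (D n y hs - D n x hs) \<le> C * norm (y - x) * (\<Prod>h\<leftarrow>hs. norm h)"
proof -
  obtain d where d: "d > 0" "\<And>y hs. norm (y - x) < d \<Longrightarrow> length hs = n \<Longrightarrow>
     norm (D n y hs - D n x hs - D (Suc n) x ((y - x) # hs)) \<le> 1 * norm (y - x) * (\<Prod>h\<leftarrow>hs. norm h)"
    using tower_rem[of 1 x n] by auto
  obtain K where K: "K \<ge> 0" "\<And>hs. length hs = Suc n \<Longrightarrow> norm (D (Suc n) x hs) \<le> K * (\<Prod>h\<leftarrow>hs. norm h)"
    using mlin_bound[OF tower_mlin] by blast
  show ?thesis
  proof (rule that[of "1 + K" d])
    fix y hs assume y: "norm (y - x) < d" and l: "length (hs::'v list) = n"
    have "norm (D n y hs - D n x hs) \<le> norm (D n y hs - D n x hs - D (Suc n) x ((y - x) # hs)) + norm (D (Suc n) x ((y - x) # hs))"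
      by (metis diff_add_cancel norm_triangle_ineq)
    also have "\<dots> \<le> 1 * norm (y - x) * (\<Prod>h\<leftarrow>hs. norm h) + K * (norm (y - x) * (\<Prod>h\<leftarrow>hs. norm h))"
      using d(2)[OF y l] K(2)[of "(y - x) # hs"] l by (intro add_mono) auto
    finally show "norm (D n y hs - D n x hs) \<le> (1 + K) * norm (y - x) * (\<Prod>h\<leftarrow>hs. norm h)"
      by (simp add: algebra_simps)
  qed (use K d in auto)
qed

end

lemma tower_unique:
  assumes "Cinf_tower f D" "Cinf_tower f E" "length hs = n"
  shows "D n x hs = E n x hs"
  using assms(3)
proof (induction n arbitrary: x hs)
  case 0
  then show ?case using tower_0[OF assms(1)] tower_0[OF assms(2)] by simp
next
  case (Suc n)
  then obtain h t where hs: "hs = h # t" and lt: "length t = n" by (cases hs) auto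
  have eq: "(\<lambda>y. D n y t) = (\<lambda>y. E n y t)" using Suc.IH[OF lt] by auto
  have "(\<lambda>h. D (Suc n) x (h # t)) = (\<lambda>h. E (Suc n) x (h # t))"
    using has_derivative_unique[OF tower_deriv[OF assms(1) lt, of x] tower_deriv[OF assms(2) lt, of x, folded eq]] .
  then show ?case unfolding hs by metis
qed


lemma le_eps_zero:
  fixes z c :: real
  assumes "c \<ge> 0" "\<And>e. e > 0 \<Longrightarrow> z \<le> e * c"
  shows "z \<le> 0"
proof (rule field_le_epsilon)
  fix e :: real assume "e > 0"
  then have "e / (c + 1) > 0" using assms(1) by simp
  from assms(2)[OF this] have "z \<le> e / (c + 1) * c" .
  also have "\<dots> \<le> e" using \<open>e > 0\<close> assms(1) by (simp add: field_simps)
  finally show "z \<le> 0 + e" by simp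
qed

context
  fixes f :: "'v::real_normed_vector \<Rightarrow> 'w::real_normed_vector" and D
  assumes tw: "Cinf_tower f D"
begin

lemma tower_path_vderiv:
  assumes "length hs = n"
  shows "((\<lambda>\<tau>. D n (p + \<tau> *\<^sub>R a) hs) has_vector_derivative D (Suc n) (p + \<tau> *\<^sub>R a) (a # hs)) (at \<tau>)"
proof -
  have d1: "((\<lambda>\<tau>. p + \<tau> *\<^sub>R a) has_derivative (\<lambda>h. h *\<^sub>R a)) (at \<tau>)"
    by (auto intro!: derivative_eq_intros)
  have d2: "((\<lambda>y. D n y hs) has_derivative (\<lambda>h. D (Suc n) (p + \<tau> *\<^sub>R a) (h # hs))) (at (p + \<tau> *\<^sub>R a))"
    by (rule tower_deriv[OF tw assms])
  have "((\<lambda>\<tau>. D n (p + \<tau> *\<^sub>R a) hs) has_derivative (\<lambda>h. D (Suc n) (p + \<tau> *\<^sub>R a) ((h *\<^sub>R a) # hs))) (at \<tau>)"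
    using diff_chain_at[OF d1 d2] by (simp add: o_def)
  then show ?thesis unfolding has_vector_derivative_def
    using tower_head_scale[OF tw assms] by simp
qed

lemma schwarz_key:
  assumes "length hs = m" "e > 0"
  shows "\<exists>d>0. \<forall>t. 0 < t \<and> t < d \<longrightarrow>
    norm ((D m (x + t *\<^sub>R a + t *\<^sub>R b) hs - D m (x + t *\<^sub>R a) hs - D m (x + t *\<^sub>R b) hs + D m x hs)
       - (t * t) *\<^sub>R D (Suc (Suc m)) x (b # a # hs))
    \<le> e * (t * t) * (2 * (norm a + norm b) * norm a * (\<Prod>h\<leftarrow>hs. norm h))"
proof -
  define P where "P = (\<Prod>h\<leftarrow>hs. norm h)"
  have P0: "P \<ge> 0" unfolding P_def by (rule prod_list_nonneg) auto
  obtain d0 where d0: "d0 > 0" "\<And>y hs'. norm (y - x) < d0 \<Longrightarrow> length hs' = Suc m \<Longrightarrow>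
     norm (D (Suc m) y hs' - D (Suc m) x hs' - D (Suc (Suc m)) x ((y - x) # hs')) \<le> e * norm (y - x) * (\<Prod>h\<leftarrow>hs'. norm h)"
    using tower_rem[OF tw \<open>e > 0\<close>, of x "Suc m"] by blast
  define d where "d = d0 / (norm a + norm b + 1)"
  have "d > 0" unfolding d_def using d0 by (simp add: add_nonneg_pos)
  show ?thesis
  proof (intro exI[of _ d] conjI allI impI)
    show "d > 0" by fact
    fix t :: real assume t: "0 < t \<and> t < d"
    define B where "B = D (Suc (Suc m)) x (b # a # hs)"
    define k where "k \<tau> = D m (x + t *\<^sub>R b + \<tau> *\<^sub>R a) hs - D m (x + \<tau> *\<^sub>R a) hs" for \<tau>
    define \<phi> where "\<phi> \<tau> = k \<tau> - \<tau> *\<^sub>R (t *\<^sub>R B)" for \<tau>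
    define \<phi>' where "\<phi>' \<tau> = D (Suc m) (x + t *\<^sub>R b + \<tau> *\<^sub>R a) (a # hs) - D (Suc m) (x + \<tau> *\<^sub>R a) (a # hs) - t *\<^sub>R B" for \<tau>
    have td: "t * (norm a + norm b) < d0"
    proof -
      have "t * (norm a + norm b) \<le> d * (norm a + norm b)"
        using t by (intro mult_right_mono) auto
      also have "\<dots> < d0"
      proof -
        have "d * (norm a + norm b) = d0 * ((norm a + norm b) / (norm a + norm b + 1))"
          unfolding d_def by simp
        also have "\<dots> < d0 * 1"
          using d0(1) by (intro mult_strict_left_mono) (auto simp: add_nonneg_pos)
        finally show ?thesis by simp
      qed
      finally show ?thesis .
    qed
    have lin1: "((\<lambda>\<tau>. \<tau> *\<^sub>R (t *\<^sub>R B)) has_vector_derivative (t *\<^sub>R B)) (at \<tau>)" for \<tau>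
      using has_vector_derivative_scaleR[OF DERIV_ident has_vector_derivative_const[of "t *\<^sub>R B"]] by simp
    have der: "(\<phi> has_vector_derivative \<phi>' \<tau>) (at \<tau>)" for \<tau>
      unfolding \<phi>_def \<phi>'_def k_def
      by (intro has_vector_derivative_diff tower_path_vderiv assms(1) lin1)
    have bnd: "norm (\<phi>' \<tau>) \<le> e * t * (2 * (norm a + norm b) * norm a * P)" if \<tau>: "\<tau> \<in> {0..t}" for \<tau>
    proof -
      define y1 where "y1 = x + t *\<^sub>R b + \<tau> *\<^sub>R a"
      define y2 where "y2 = x + \<tau> *\<^sub>R a"
      have n1: "norm (y1 - x) \<le> t * (norm a + norm b)"
      proof -
        have "norm (y1 - x) \<le> norm (t *\<^sub>R b) + norm (\<tau> *\<^sub>R a)" unfolding y1_def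
          by (metis add_diff_cancel_left' norm_triangle_ineq add.assoc)
        also have "\<dots> \<le> t * norm b + t * norm a" using \<tau> t by (auto intro!: add_mono mult_right_mono)
        finally show ?thesis by (simp add: algebra_simps)
      qed
      have n2: "norm (y2 - x) \<le> t * norm a" unfolding y2_def using \<tau> t by (auto intro!: mult_right_mono)
      have n2': "t * norm a \<le> t * (norm a + norm b)" using t by (intro mult_left_mono) auto
      have l: "length (a # hs) = Suc m" using assms(1) by simp
      have R1: "norm (D (Suc m) y1 (a # hs) - D (Suc m) x (a # hs) - D (Suc (Suc m)) x ((y1 - x) # a # hs)) \<le> e * norm (y1 - x) * (norm a * P)"
        using d0(2)[OF _ l, of y1] n1 td unfolding P_def by simp
      have R2: "norm (D (Suc m) y2 (a # hs) - D (Suc m) x (a # hs) - D (Suc (Suc m)) x ((y2 - x) # a # hs)) \<le> e * norm (y2 - x) * (norm a * P)"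
        using d0(2)[OF _ l, of y2] n2 n2' td unfolding P_def by simp
      have lin: "D (Suc (Suc m)) x ((y1 - x) # a # hs) - D (Suc (Suc m)) x ((y2 - x) # a # hs) = t *\<^sub>R B"
      proof -
        have "y1 - x = (y2 - x) + t *\<^sub>R b" unfolding y1_def y2_def by (simp add: algebra_simps)
        then show ?thesis unfolding B_def
          using tower_head_add[OF tw l, of x "y2 - x" "t *\<^sub>R b"] tower_head_scale[OF tw l, of x t b]
          by (simp only:) simp
      qed
      have "\<phi>' \<tau> = (D (Suc m) y1 (a # hs) - D (Suc m) x (a # hs) - D (Suc (Suc m)) x ((y1 - x) # a # hs))
          - (D (Suc m) y2 (a # hs) - D (Suc m) x (a # hs) - D (Suc (Suc m)) x ((y2 - x) # a # hs))"
        unfolding \<phi>'_def y1_def[symmetric] y2_def[symmetric] lin[symmetric] by (simp add: algebra_simps)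
      then have "norm (\<phi>' \<tau>) \<le> e * norm (y1 - x) * (norm a * P) + e * norm (y2 - x) * (norm a * P)"
        using R1 R2 norm_triangle_ineq4 by (smt (verit))
      also have "\<dots> \<le> e * (t * (norm a + norm b)) * (norm a * P) + e * (t * (norm a + norm b)) * (norm a * P)"
      proof -
        have aP: "norm a * P \<ge> 0" using P0 by simp
        have "e * norm (y1 - x) \<le> e * (t * (norm a + norm b))" using n1 \<open>e > 0\<close> by simp
        then have 1: "e * norm (y1 - x) * (norm a * P) \<le> e * (t * (norm a + norm b)) * (norm a * P)"
          using aP by (rule mult_right_mono)
        have "e * norm (y2 - x) \<le> e * (t * (norm a + norm b))" using n2 n2' \<open>e > 0\<close> by simp
        then have 2: "e * norm (y2 - x) * (norm a * P) \<le> e * (t * (norm a + norm b)) * (norm a * P)"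
          using aP by (rule mult_right_mono)
        from 1 2 show ?thesis by (rule add_mono)
      qed
      finally show ?thesis by (simp add: algebra_simps)
    qed
    have "norm (\<phi> t - \<phi> 0) \<le> e * t * (2 * (norm a + norm b) * norm a * P) * (t - 0)"
      by (rule vmvt[OF der bnd]) (use t in auto)
    moreover have "\<phi> t - \<phi> 0 = (D m (x + t *\<^sub>R a + t *\<^sub>R b) hs - D m (x + t *\<^sub>R a) hs - D m (x + t *\<^sub>R b) hs + D m x hs)
       - (t * t) *\<^sub>R B"
      unfolding \<phi>_def k_def by (simp add: algebra_simps)
    ultimately show "norm ((D m (x + t *\<^sub>R a + t *\<^sub>R b) hs - D m (x + t *\<^sub>R a) hs - D m (x + t *\<^sub>R b) hs + D m x hs)
       - (t * t) *\<^sub>R D (Suc (Suc m)) x (b # a # hs))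
    \<le> e * (t * t) * (2 * (norm a + norm b) * norm a * (\<Prod>h\<leftarrow>hs. norm h))"
      unfolding B_def P_def by (simp add: algebra_simps)
  qed
qed

lemma tower_swap0:
  assumes "length hs = m"
  shows "D (Suc (Suc m)) x (a # b # hs) = D (Suc (Suc m)) x (b # a # hs)"
proof -
  define P where "P = (\<Prod>h\<leftarrow>hs. norm h)"
  have P0: "P \<ge> 0" unfolding P_def by (rule prod_list_nonneg) auto
  define Cab where "Cab = 2 * (norm a + norm b) * norm a * P"
  define Cba where "Cba = 2 * (norm b + norm a) * norm b * P"
  have C0: "Cab + Cba \<ge> 0" unfolding Cab_def Cba_def using P0 by simp
  have "norm (D (Suc (Suc m)) x (b # a # hs) - D (Suc (Suc m)) x (a # b # hs)) \<le> 0"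
  proof (rule le_eps_zero[OF C0])
    fix e :: real assume "e > 0"
    obtain d1 where d1: "d1 > 0" "\<And>t. 0 < t \<and> t < d1 \<Longrightarrow>
      norm ((D m (x + t *\<^sub>R a + t *\<^sub>R b) hs - D m (x + t *\<^sub>R a) hs - D m (x + t *\<^sub>R b) hs + D m x hs)
       - (t * t) *\<^sub>R D (Suc (Suc m)) x (b # a # hs)) \<le> e * (t * t) * Cab"
      using schwarz_key[OF assms \<open>e > 0\<close>, of x a b] unfolding Cab_def P_def by blast
    obtain d2 where d2: "d2 > 0" "\<And>t. 0 < t \<and> t < d2 \<Longrightarrow>
      norm ((D m (x + t *\<^sub>R b + t *\<^sub>R a) hs - D m (x + t *\<^sub>R b) hs - D m (x + t *\<^sub>R a) hs + D m x hs)
       - (t * t) *\<^sub>R D (Suc (Suc m)) x (a # b # hs)) \<le> e * (t * t) * Cba"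
      using schwarz_key[OF assms \<open>e > 0\<close>, of x b a] unfolding Cba_def P_def by blast
    define t where "t = min d1 d2 / 2"
    have t: "0 < t" "t < d1" "t < d2" unfolding t_def using d1 d2 by auto
    define Q where "Q = D m (x + t *\<^sub>R a + t *\<^sub>R b) hs - D m (x + t *\<^sub>R a) hs - D m (x + t *\<^sub>R b) hs + D m x hs"
    have Q2: "Q = D m (x + t *\<^sub>R b + t *\<^sub>R a) hs - D m (x + t *\<^sub>R b) hs - D m (x + t *\<^sub>R a) hs + D m x hs"
      unfolding Q_def by (simp add: algebra_simps)
    have e1: "norm (Q - (t * t) *\<^sub>R D (Suc (Suc m)) x (b # a # hs)) \<le> e * (t * t) * Cab"
      using d1(2)[of t] t unfolding Q_def by simp
    have e2: "norm (Q - (t * t) *\<^sub>R D (Suc (Suc m)) x (a # b # hs)) \<le> e * (t * t) * Cba"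
      using d2(2)[of t] t unfolding Q2 by simp
    have "(t * t) *\<^sub>R (D (Suc (Suc m)) x (b # a # hs) - D (Suc (Suc m)) x (a # b # hs))
        = (Q - (t * t) *\<^sub>R D (Suc (Suc m)) x (a # b # hs)) - (Q - (t * t) *\<^sub>R D (Suc (Suc m)) x (b # a # hs))"
      by (simp add: algebra_simps)
    then have "(t * t) * norm (D (Suc (Suc m)) x (b # a # hs) - D (Suc (Suc m)) x (a # b # hs)) \<le> e * (t * t) * Cba + e * (t * t) * Cab"
    proof -
      assume eq: "(t * t) *\<^sub>R (D (Suc (Suc m)) x (b # a # hs) - D (Suc (Suc m)) x (a # b # hs))
        = (Q - (t * t) *\<^sub>R D (Suc (Suc m)) x (a # b # hs)) - (Q - (t * t) *\<^sub>R D (Suc (Suc m)) x (b # a # hs))"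
      have "norm ((t * t) *\<^sub>R (D (Suc (Suc m)) x (b # a # hs) - D (Suc (Suc m)) x (a # b # hs))) \<le> e * (t * t) * Cba + e * (t * t) * Cab"
        unfolding eq using e1 e2 norm_triangle_ineq4 by (smt (verit))
      then show ?thesis by simp
    qed
    then have "(t * t) * norm (D (Suc (Suc m)) x (b # a # hs) - D (Suc (Suc m)) x (a # b # hs)) \<le> (t * t) * (e * (Cab + Cba))"
      by (simp add: algebra_simps)
    then show "norm (D (Suc (Suc m)) x (b # a # hs) - D (Suc (Suc m)) x (a # b # hs)) \<le> e * (Cab + Cba)"
      using t(1) by (simp add: mult_le_cancel_left_pos)
  qed
  then show ?thesis by simp
qed

lemma tower_tail_cong:
  assumes "\<And>y. D n y l1 = D n y l2" "length l1 = n" "length l2 = n"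
  shows "D (Suc n) x (h # l1) = D (Suc n) x (h # l2)"
proof -
  have eq: "(\<lambda>y. D n y l1) = (\<lambda>y. D n y l2)" using assms(1) by auto
  have "(\<lambda>h. D (Suc n) x (h # l1)) = (\<lambda>h. D (Suc n) x (h # l2))"
    using has_derivative_unique[OF tower_deriv[OF tw assms(2), of x] tower_deriv[OF tw assms(3), of x, folded eq]] .
  then show ?thesis by metis
qed

lemma tower_move:
  assumes "length (a # replicate k c @ r) = n"
  shows "D n x (a # replicate k c @ r) = D n x (replicate k c @ a # r)"
  using assms
proof (induction k arbitrary: n x)
  case 0
  then show ?case by simp
next
  case (Suc k)
  then obtain m where n: "n = Suc (Suc m)" and lm: "length (replicate k c @ r) = m" by auto
  have "D n x (a # replicate (Suc k) c @ r) = D n x (c # a # replicate k c @ r)"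
    unfolding n using tower_swap0[OF lm, of x a c] by simp
  also have "\<dots> = D n x (c # replicate k c @ a # r)"
    unfolding n by (rule tower_tail_cong) (use Suc.IH lm in auto)
  finally show ?case by simp
qed

end


lemma prod_map_bound:
  assumes "\<And>h. norm (g h) \<le> K * norm h" "K \<ge> 0"
  shows "(\<Prod>h\<leftarrow>map g hs. norm h) \<le> K ^ length hs * (\<Prod>h\<leftarrow>hs. norm h)"
proof (induction hs)
  case Nil then show ?case by simp
next
  case (Cons h hs)
  have p0: "(\<Prod>h\<leftarrow>map g hs. norm h) \<ge> 0" by (rule prod_list_nonneg) auto
  have "norm (g h) * (\<Prod>h\<leftarrow>map g hs. norm h) \<le> (K * norm h) * (K ^ length hs * (\<Prod>h\<leftarrow>hs. norm h))"
    by (rule mult_mono[OF assms(1) Cons.IH]) (use assms(2) p0 in auto)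
  then show ?case by (simp add: ac_simps)
qed

section \<open>Group facts\<close>

context
  fixes T :: "real \<Rightarrow> 'a::banach \<Rightarrow> 'a"
  assumes grp: "sc_group T"
begin

lemma T_bl: "bounded_linear (T s)"
  using grp unfolding sc_group_def by blast

lemma T_0[simp]: "T 0 v = v"
  using grp unfolding sc_group_def by simp

lemma T_comp: "T a (T b v) = T (a + b) v"
  using grp unfolding sc_group_def by (metis comp_apply)

lemma T_inv1[simp]: "T (-s) (T s v) = v" by (simp add: T_comp)
lemma T_inv2[simp]: "T s (T (-s) v) = v" by (simp add: T_comp)

lemma T_add: "T s (u + v) = T s u + T s v"
  using linear_add[OF bounded_linear.linear[OF T_bl]] .
lemma T_diff: "T s (u - v) = T s u - T s v"
  using linear_diff[OF bounded_linear.linear[OF T_bl]] .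
lemma T_scale: "T s (c *\<^sub>R u) = c *\<^sub>R T s u"
  using linear_scale[OF bounded_linear.linear[OF T_bl]] .
lemma T_zero[simp]: "T s 0 = 0"
  using linear_0[OF bounded_linear.linear[OF T_bl]] .

lemma T_cont: "((\<lambda>s. T s u) \<longlongrightarrow> T x u) (at x)"
proof -
  have "continuous_on UNIV (\<lambda>s. T s u)" using grp unfolding sc_group_def by blast
  then show ?thesis by (simp add: continuous_on_def)
qed

section \<open>The spaces U_l\<close>

lemma Ul_Suc_iff: "u \<in> Ul T (Suc l) \<longleftrightarrow> u \<in> Ul T (Suc 0) \<and> gen T u \<in> Ul T l"
proof (induction l arbitrary: u)
  case 0 then show ?case by simp
next
  case (Suc l)
  have "u \<in> Ul T (Suc (Suc l)) \<longleftrightarrow> u \<in> Ul T (Suc l) \<and> (\<lambda>s. T s ((gen T ^^ Suc l) u)) differentiable (at 0)"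
    by simp
  also have "\<dots> \<longleftrightarrow> u \<in> Ul T (Suc 0) \<and> gen T u \<in> Ul T l \<and> (\<lambda>s. T s ((gen T ^^ l) (gen T u))) differentiable (at 0)"
    using Suc.IH by (simp add: funpow_Suc_right del: funpow.simps)
  also have "\<dots> \<longleftrightarrow> u \<in> Ul T (Suc 0) \<and> gen T u \<in> Ul T (Suc l)" by simp
  finally show ?case .
qed

lemma Ul1_iff: "u \<in> Ul T (Suc 0) \<longleftrightarrow> (\<lambda>s. T s u) differentiable (at 0)"
  by simp

lemma gen_deriv: "u \<in> Ul T (Suc 0) \<Longrightarrow> ((\<lambda>s. T s u) has_vector_derivative gen T u) (at 0)"
  unfolding gen_def using vector_derivative_works by auto

lemma gen_eq:
  assumes "((\<lambda>s. T s u) has_vector_derivative w) (at 0)"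
  shows "u \<in> Ul T (Suc 0)" "gen T u = w"
  using assms differentiableI_vector vector_derivative_at unfolding gen_def by auto

lemma Ul1_add: "u \<in> Ul T (Suc 0) \<Longrightarrow> v \<in> Ul T (Suc 0) \<Longrightarrow> u + v \<in> Ul T (Suc 0) \<and> gen T (u + v) = gen T u + gen T v"
proof -
  assume "u \<in> Ul T (Suc 0)" "v \<in> Ul T (Suc 0)"
  then have "((\<lambda>s. T s (u + v)) has_vector_derivative gen T u + gen T v) (at 0)"
    using has_vector_derivative_add[OF gen_deriv gen_deriv] by (simp add: T_add)
  then show ?thesis using gen_eq by blast
qed

lemma Ul1_scale: "u \<in> Ul T (Suc 0) \<Longrightarrow> c *\<^sub>R u \<in> Ul T (Suc 0) \<and> gen T (c *\<^sub>R u) = c *\<^sub>R gen T u"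
proof -
  assume "u \<in> Ul T (Suc 0)"
  then have "((\<lambda>s. T s (c *\<^sub>R u)) has_vector_derivative c *\<^sub>R gen T u) (at 0)"
    using has_vector_derivative_scaleR[OF DERIV_const gen_deriv] by (simp add: T_scale)
  then show ?thesis using gen_eq by blast
qed

lemma Ul1_zero: "0 \<in> Ul T (Suc 0) \<and> gen T 0 = 0"
  using gen_eq[of 0 0] by simp

lemma Ul_add: "u \<in> Ul T l \<Longrightarrow> v \<in> Ul T l \<Longrightarrow> u + v \<in> Ul T l"
proof (induction l arbitrary: u v)
  case 0 then show ?case by simp
next
  case (Suc l)
  then show ?case using Ul1_add Suc.IH by (simp only: Ul_Suc_iff[of _ l])
qed

lemma Ul_scale: "u \<in> Ul T l \<Longrightarrow> c *\<^sub>R u \<in> Ul T l"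
proof (induction l arbitrary: u)
  case 0 then show ?case by simp
next
  case (Suc l)
  then show ?case using Ul1_scale Suc.IH by (simp only: Ul_Suc_iff[of _ l])
qed

lemma Ul_zero: "0 \<in> Ul T l"
proof (induction l)
  case 0 then show ?case by simp
next
  case (Suc l)
  then show ?case using Ul1_zero by (simp only: Ul_Suc_iff[of _ l])
qed

lemma Ul_diff: "u \<in> Ul T l \<Longrightarrow> v \<in> Ul T l \<Longrightarrow> u - v \<in> Ul T l"
  using Ul_add[of u l "(-1) *\<^sub>R v"] Ul_scale[of v l "-1"] by simp

lemma Ul_sum: "finite A \<Longrightarrow> (\<And>i. i \<in> A \<Longrightarrow> g i \<in> Ul T l) \<Longrightarrow> (\<Sum>i\<in>A. g i) \<in> Ul T l"
  by (induction A rule: finite_induct) (auto intro: Ul_add Ul_zero)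

lemma Ul_mono: "l \<le> l' \<Longrightarrow> Ul T l' \<subseteq> Ul T l"
proof (induction l' rule: dec_induct)
  case base then show ?case by simp
next
  case (step n) then show ?case by auto
qed

lemma norm_l_0[simp]: "norm_l T 0 u = norm u"
  unfolding norm_l_def by simp

lemma norm_l_Suc: "norm_l T (Suc l) u = norm u + norm_l T l (gen T u)"
  unfolding norm_l_def sum.atMost_Suc_shift by (simp add: funpow_Suc_right del: funpow.simps)

lemma norm_l_nonneg: "norm_l T l u \<ge> 0"
  unfolding norm_l_def by (rule sum_nonneg) auto

lemma norm_le_norm_l: "norm u \<le> norm_l T l u"
  by (cases l) (auto simp: norm_l_Suc norm_l_nonneg)

lemma norm_l_mono1: "norm_l T l u \<le> norm_l T (Suc l) u"
  unfolding norm_l_def by (simp add: sum.atMost_Suc)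

lemma norm_l_mono: "l \<le> l' \<Longrightarrow> norm_l T l u \<le> norm_l T l' u"
proof (induction l' rule: dec_induct)
  case base then show ?case by simp
next
  case (step n) then show ?case using norm_l_mono1[of n u] by linarith
qed

lemma norm_l_add: "u \<in> Ul T l \<Longrightarrow> v \<in> Ul T l \<Longrightarrow> norm_l T l (u + v) \<le> norm_l T l u + norm_l T l v"
proof (induction l arbitrary: u v)
  case 0 then show ?case by (simp add: norm_triangle_ineq)
next
  case (Suc l)
  have u: "u \<in> Ul T (Suc 0)" "gen T u \<in> Ul T l" using Suc.prems(1) Ul_Suc_iff by blast+
  have v: "v \<in> Ul T (Suc 0)" "gen T v \<in> Ul T l" using Suc.prems(2) Ul_Suc_iff by blast+
  have "gen T (u + v) = gen T u + gen T v" using Ul1_add u v by blast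
  moreover have "norm_l T l (gen T u + gen T v) \<le> norm_l T l (gen T u) + norm_l T l (gen T v)"
    using u v by (intro Suc.IH) auto
  ultimately have "norm_l T l (gen T (u + v)) \<le> norm_l T l (gen T u) + norm_l T l (gen T v)" by simp
  then show ?case unfolding norm_l_Suc using norm_triangle_ineq[of u v] by linarith
qed

lemma norm_l_scale: "u \<in> Ul T l \<Longrightarrow> norm_l T l (c *\<^sub>R u) = \<bar>c\<bar> * norm_l T l u"
proof (induction l arbitrary: u)
  case 0 then show ?case by simp
next
  case (Suc l)
  have u: "u \<in> Ul T (Suc 0)" "gen T u \<in> Ul T l" using Suc.prems(1) Ul_Suc_iff by blast+
  then have "gen T (c *\<^sub>R u) = c *\<^sub>R gen T u" using Ul1_scale by blast
  then show ?case unfolding norm_l_Suc using Suc.IH[OF u(2)] by (simp add: algebra_simps)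
qed

lemma norm_l_diff: "u \<in> Ul T l \<Longrightarrow> v \<in> Ul T l \<Longrightarrow> norm_l T l (u - v) \<le> norm_l T l u + norm_l T l v"
  using norm_l_add[of u l "(-1) *\<^sub>R v"] Ul_scale[of v l "-1"] norm_l_scale[of v l "-1"] by auto

lemma norm_l_sum: "finite A \<Longrightarrow> (\<And>i. i \<in> A \<Longrightarrow> g i \<in> Ul T l) \<Longrightarrow>
    norm_l T l (\<Sum>i\<in>A. g i) \<le> (\<Sum>i\<in>A. norm_l T l (g i))"
proof (induction A rule: finite_induct)
  case empty then show ?case using norm_l_scale[OF Ul_zero, of l 0] by simp
next
  case (insert x F)
  have "norm_l T l (g x + (\<Sum>i\<in>F. g i)) \<le> norm_l T l (g x) + norm_l T l (\<Sum>i\<in>F. g i)"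
    using insert by (intro norm_l_add Ul_sum) auto
  then show ?case using insert by simp
qed

section \<open>Equivariance of the derivative tower\<close>

definition "phiT t = (\<lambda>h::real \<times> 'a. (fst h, T t (snd h)))"

lemma phiT_bl: "bounded_linear (phiT t)"
  unfolding phiT_def
  by (intro bounded_linear_Pair bounded_linear_fst bounded_linear_compose[OF T_bl bounded_linear_snd])

lemma tower_equiv_aux:
  fixes Fl :: "'a \<Rightarrow> 'a"
  assumes tw: "Cinf_tower (\<lambda>(s, u). T s (Fl (T (-s) u))) D"
  shows "Cinf_tower (\<lambda>(s, u). T s (Fl (T (-s) u)))
           (\<lambda>n p hs. T (-t) (D n (fst p + t, T t (snd p)) (map (phiT t) hs)))"
proof -
  define G where "G = (\<lambda>(s, u). T s (Fl (T (-s) u)))"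
  define \<phi> where "\<phi> p = (fst p + t, T t (snd p))" for p :: "real \<times> 'a"
  define E where "E = (\<lambda>n p hs. T (-t) (D n (\<phi> p) (map (phiT t) hs)))"
  have tw': "Cinf_tower G D" using tw unfolding G_def .
  obtain K1 where K1: "K1 > 0" "\<And>x. norm (T (-t) x) \<le> norm x * K1"
    using bounded_linear.pos_bounded[OF T_bl[of "-t"]] by blast
  obtain K2 where K2: "K2 > 0" "\<And>x. norm (phiT t x) \<le> norm x * K2"
    using bounded_linear.pos_bounded[OF phiT_bl[of t]] by blast
  have phid: "\<phi> y - \<phi> p = phiT t (y - p)" for y p
    unfolding \<phi>_def phiT_def by (simp add: T_diff)
  have K2': "norm (phiT t h) \<le> K2 * norm h" for h using K2(2)[of h] by (simp add: ac_simps)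
  have "Cinf_tower G E" unfolding Cinf_tower_def
  proof (intro conjI allI impI)
    fix x :: "real \<times> 'a"
    obtain s w where x: "x = (s, w)" by (cases x)
    show "E 0 x [] = G x"
      unfolding E_def x \<phi>_def using tower_0[OF tw', of "(s + t, T t w)"]
      by (simp add: G_def T_comp algebra_simps)
  next
    fix n x
    show "mlin_bounded n (E n x)" unfolding mlin_bounded_def
    proof (intro conjI allI impI)
      fix i and hs :: "(real \<times> 'a) list" and a b and c :: real assume i: "i < n" and l: "length hs = n"
      have l': "length (map (phiT t) hs) = n" using l by simp
      have pa: "phiT t (a + b) = phiT t a + phiT t b" and ps: "phiT t (c *\<^sub>R a) = c *\<^sub>R phiT t a"
        using linear_add[OF bounded_linear.linear[OF phiT_bl]] linear_scale[OF bounded_linear.linear[OF phiT_bl]] by auto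
      show "E n x (hs[i := a + b]) = E n x (hs[i := a]) + E n x (hs[i := b])"
        unfolding E_def map_update pa mlin_add[OF tower_mlin[OF tw'] i l'] T_add ..
      show "E n x (hs[i := c *\<^sub>R a]) = c *\<^sub>R E n x (hs[i := a])"
        unfolding E_def map_update ps mlin_scale[OF tower_mlin[OF tw'] i l'] T_scale ..
    next
      obtain KD where KD: "KD \<ge> 0" "\<And>hs. length hs = n \<Longrightarrow> norm (D n (\<phi> x) hs) \<le> KD * (\<Prod>h\<leftarrow>hs. norm h)"
        using mlin_bound[OF tower_mlin[OF tw']] by blast
      show "\<exists>K. \<forall>hs. length hs = n \<longrightarrow> norm (E n x hs) \<le> K * (\<Prod>h\<leftarrow>hs. norm h)"
      proof (intro exI[of _ "K1 * KD * K2 ^ n"] allI impI)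
        fix hs :: "(real \<times> 'a) list" assume l: "length hs = n"
        have "norm (E n x hs) \<le> norm (D n (\<phi> x) (map (phiT t) hs)) * K1" unfolding E_def by (rule K1(2))
        also have "\<dots> \<le> KD * (\<Prod>h\<leftarrow>map (phiT t) hs. norm h) * K1"
          using KD(2)[of "map (phiT t) hs"] l K1(1) by (intro mult_right_mono) auto
        also have "\<dots> \<le> KD * (K2 ^ n * (\<Prod>h\<leftarrow>hs. norm h)) * K1"
          using prod_map_bound[OF K2', of hs] K2(1) KD(1) K1(1) l
          by (intro mult_right_mono mult_left_mono) auto
        finally show "norm (E n x hs) \<le> K1 * KD * K2 ^ n * (\<Prod>h\<leftarrow>hs. norm h)" by (simp add: ac_simps)
      qed
    qed
  next
    fix n x and e :: real assume "e > 0"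
    define C where "C = K1 * K2 ^ Suc n"
    have C0: "C > 0" unfolding C_def using K1 K2 by simp
    obtain d' where d': "d' > 0" "\<forall>y hs. norm (y - \<phi> x) < d' \<longrightarrow> length hs = n \<longrightarrow>
       norm (D n y hs - D n (\<phi> x) hs - D (Suc n) (\<phi> x) ((y - \<phi> x) # hs)) \<le> (e / C) * norm (y - \<phi> x) * (\<Prod>h\<leftarrow>hs. norm h)"
      using tower_rem[OF tw', of "e / C" "\<phi> x" n] C0 \<open>e > 0\<close> by auto
    show "\<exists>d>0. \<forall>y. norm (y - x) < d \<longrightarrow> (\<forall>hs. length hs = n \<longrightarrow>
        norm (E n y hs - E n x hs - E (Suc n) x ((y - x) # hs)) \<le> e * norm (y - x) * (\<Prod>h\<leftarrow>hs. norm h))"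
    proof (intro exI[of _ "d' / K2"] conjI allI impI)
      show "d' / K2 > 0" using d' K2 by simp
      fix y hs assume y: "norm (y - x) < d' / K2" and l: "length (hs :: (real \<times> 'a) list) = n"
      have ny: "norm (\<phi> y - \<phi> x) \<le> K2 * norm (y - x)" unfolding phid by (rule K2')
      have "K2 * norm (y - x) < d'" using y K2(1) by (simp add: field_simps)
      then have yd: "norm (\<phi> y - \<phi> x) < d'" using ny by linarith
      have eq: "E n y hs - E n x hs - E (Suc n) x ((y - x) # hs) =
          T (-t) (D n (\<phi> y) (map (phiT t) hs) - D n (\<phi> x) (map (phiT t) hs)
             - D (Suc n) (\<phi> x) ((\<phi> y - \<phi> x) # map (phiT t) hs))"
        unfolding E_def phid by (simp add: T_diff)
      have P0: "(\<Prod>h\<leftarrow>map (phiT t) hs. norm h) \<ge> 0" by (rule prod_list_nonneg) auto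
      have "norm (E n y hs - E n x hs - E (Suc n) x ((y - x) # hs)) \<le>
          norm (D n (\<phi> y) (map (phiT t) hs) - D n (\<phi> x) (map (phiT t) hs)
             - D (Suc n) (\<phi> x) ((\<phi> y - \<phi> x) # map (phiT t) hs)) * K1"
        unfolding eq by (rule K1(2))
      also have "\<dots> \<le> ((e / C) * norm (\<phi> y - \<phi> x) * (\<Prod>h\<leftarrow>map (phiT t) hs. norm h)) * K1"
        using d'(2)[rule_format, OF yd, of "map (phiT t) hs"] l K1(1) by (intro mult_right_mono) auto
      also have "\<dots> \<le> ((e / C) * (K2 * norm (y - x)) * (K2 ^ n * (\<Prod>h\<leftarrow>hs. norm h))) * K1"
        using ny prod_map_bound[OF K2', of hs] K2(1) K1(1) C0 \<open>e > 0\<close> P0 l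
        by (intro mult_right_mono mult_mono) auto
      also have "\<dots> = e * norm (y - x) * (\<Prod>h\<leftarrow>hs. norm h)"
        unfolding C_def using K1(1) K2(1) by (simp add: field_simps)
      finally show "norm (E n y hs - E n x hs - E (Suc n) x ((y - x) # hs)) \<le> e * norm (y - x) * (\<Prod>h\<leftarrow>hs. norm h)" .
    qed
  qed
  then show ?thesis unfolding G_def E_def \<phi>_def .
qed

lemma tower_equiv:
  fixes Fl :: "'a \<Rightarrow> 'a" and hs :: "(real \<times> 'a) list"
  assumes tw: "Cinf_tower (\<lambda>(s, u). T s (Fl (T (-s) u))) D" "length hs = n"
  shows "D n (s + t, T t w) (map (phiT t) hs) = T t (D n (s, w) hs)"
proof -
  have "D n (s, w) hs = T (-t) (D n (s + t, T t w) (map (phiT t) hs))"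
    using tower_unique[OF tw(1) tower_equiv_aux[OF tw(1), of t] tw(2)] by simp
  then show ?thesis by simp
qed

end


lemma sum_lessThan_add_split:
  fixes g :: "nat \<Rightarrow> 'b::comm_monoid_add"
  shows "(\<Sum>i<k + j. g i) = (\<Sum>i<k. g i) + (\<Sum>i<j. g (k + i))"
  by (induction j) (auto simp: add.assoc)

lemma tower_chain:
  fixes hs :: "real \<Rightarrow> 'v::real_normed_vector list" and y :: "real \<Rightarrow> 'v"
  assumes tw: "Cinf_tower f D" and lhs: "\<And>s. length (hs s) = n" and lhs': "length hs' = n"
    and dy: "(y has_vector_derivative y') (at x)"
    and dhs: "\<And>i. i < n \<Longrightarrow> ((\<lambda>s. hs s ! i) has_vector_derivative hs' ! i) (at x)"
  shows "((\<lambda>s. D n (y s) (hs s)) has_vector_derivative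
     (D (Suc n) (y x) (y' # hs x) + (\<Sum>i<n. D n (y x) ((hs x)[i := hs' ! i])))) (at x)"
proof -
  define y0 where "y0 = y x"
  define \<psi> where "\<psi> s = D n (y s) (hs s) - D n y0 (hs s)" for s
  define \<rho> where "\<rho> s = D n (y s) (hs s) - D n y0 (hs s) - D (Suc n) y0 ((y s - y0) # hs s)" for s
  have d2: "((\<lambda>s. D n y0 (hs s)) has_vector_derivative (\<Sum>i<n. D n y0 ((hs x)[i := hs' ! i]))) (at x)"
    by (rule mlin_vderiv[OF tower_mlin[OF tw] lhs lhs' dhs])
  have hcont: "((\<lambda>s. hs s ! i) \<longlongrightarrow> hs x ! i) (at x)" if "i < n" for i
    using has_vector_derivative_continuous[OF dhs[OF that]] by (simp add: isCont_def)
  have ycont: "(y \<longlongrightarrow> y0) (at x)"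
    using has_vector_derivative_continuous[OF dy] by (simp add: isCont_def y0_def)
  have quot: "((\<lambda>s. (y s - y0) /\<^sub>R (s - x)) \<longlongrightarrow> y') (at x)"
    using vderiv_quotientD[OF dy] unfolding y0_def .
  have d1: "(\<psi> has_vector_derivative D (Suc n) y0 (y' # hs x)) (at x)"
  proof (rule vderiv_quotientI)
    have psix: "\<psi> x = 0" unfolding \<psi>_def y0_def by simp
    have split: "(\<psi> s - \<psi> x) /\<^sub>R (s - x) = D (Suc n) y0 (((y s - y0) /\<^sub>R (s - x)) # hs s) + \<rho> s /\<^sub>R (s - x)" for s
      unfolding psix \<rho>_def \<psi>_def tower_head_scale[OF tw lhs] y0_def by (simp add: algebra_simps)
    have t1: "((\<lambda>s. D (Suc n) y0 (((y s - y0) /\<^sub>R (s - x)) # hs s)) \<longlongrightarrow> D (Suc n) y0 (y' # hs x)) (at x)"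
    proof (rule mlin_tendsto[OF tower_mlin[OF tw]])
      fix i assume "i < Suc n"
      then show "((\<lambda>s. (((y s - y0) /\<^sub>R (s - x)) # hs s) ! i) \<longlongrightarrow> (y' # hs x) ! i) (at x)"
        using quot hcont by (cases i) auto
    qed (use lhs in auto)
    have t2: "((\<lambda>s. \<rho> s /\<^sub>R (s - x)) \<longlongrightarrow> 0) (at x)"
      unfolding tendsto_iff
    proof (intro allI impI)
      fix \<epsilon> :: real assume "\<epsilon> > 0"
      define q where "q s = norm ((y s - y0) /\<^sub>R (s - x)) * (\<Prod>h\<leftarrow>hs s. norm h)" for s
      define L0 where "L0 = norm y' * (\<Prod>h\<leftarrow>hs x. norm h)"
      have L0: "L0 \<ge> 0" unfolding L0_def by (intro mult_nonneg_nonneg prod_list_nonneg) auto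
      have "(q \<longlongrightarrow> L0) (at x)" unfolding q_def L0_def
        by (intro tendsto_mult tendsto_norm quot prod_norm_tendsto[OF lhs _ hcont]) (use lhs in auto)
      then have ev1: "\<forall>\<^sub>F s in at x. q s < L0 + 1" by (rule order_tendstoD) simp
      define e where "e = \<epsilon> / (L0 + 2)"
      have e: "e > 0" unfolding e_def using \<open>\<epsilon> > 0\<close> L0 by simp
      obtain d where d: "d > 0" "\<forall>z hs. norm (z - y0) < d \<longrightarrow> length hs = n \<longrightarrow>
        norm (D n z hs - D n y0 hs - D (Suc n) y0 ((z - y0) # hs)) \<le> e * norm (z - y0) * (\<Prod>h\<leftarrow>hs. norm h)"
        using tower_rem[OF tw e, of y0 n] by blast
      have ev2: "\<forall>\<^sub>F s in at x. dist (y s) y0 < d" using ycont d(1) unfolding tendsto_iff by blast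
      have ev3: "\<forall>\<^sub>F s in at x. s \<noteq> x" by (simp add: eventually_at_filter)
      show "\<forall>\<^sub>F s in at x. dist (\<rho> s /\<^sub>R (s - x)) 0 < \<epsilon>"
        using ev1 ev2 ev3
      proof eventually_elim
        case (elim s)
        have "norm (\<rho> s) \<le> e * norm (y s - y0) * (\<Prod>h\<leftarrow>hs s. norm h)"
          unfolding \<rho>_def using d(2) elim(2) lhs by (simp add: dist_norm)
        then have "norm (\<rho> s /\<^sub>R (s - x)) \<le> e * q s"
          unfolding q_def using elim(3) by (simp add: divide_simps ac_simps)
        also have "\<dots> \<le> e * (L0 + 1)" using elim(1) e by simp
        also have "\<dots> < \<epsilon>" unfolding e_def using \<open>\<epsilon> > 0\<close> L0 by (simp add: field_simps)
        finally show ?case by simp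
      qed
    qed
    show "((\<lambda>s. (\<psi> s - \<psi> x) /\<^sub>R (s - x)) \<longlongrightarrow> D (Suc n) y0 (y' # hs x)) (at x)"
      unfolding split using tendsto_add[OF t1 t2] by simp
  qed
  have "(\<lambda>s. D n (y s) (hs s)) = (\<lambda>s. \<psi> s + D n y0 (hs s))" unfolding \<psi>_def by auto
  then show ?thesis using has_vector_derivative_add[OF d1 d2] unfolding y0_def by simp
qed


locale eqsetting =
  fixes T :: "real \<Rightarrow> 'a::banach \<Rightarrow> 'a" and Fl :: "'a \<Rightarrow> 'a" and D and u0 :: 'a
  assumes grp: "sc_group T" and tw: "Cinf_tower (\<lambda>(s, u). T s (Fl (T (-s) u))) D"
begin

lemma RD:
  assumes u0: "u0 \<in> Ul T (Suc 0)" and vs: "set vs \<subseteq> Ul T (Suc 0)" "length vs = j"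
  shows "pd D k j 0 u0 vs \<in> Ul T (Suc 0) \<and> gen T (pd D k j 0 u0 vs) =
     pd D (Suc k) j 0 u0 vs + pd D k (Suc j) 0 u0 (gen T u0 # vs) + (\<Sum>i<j. pd D k j 0 u0 (vs[i := gen T (vs ! i)]))"
proof -
  define hs where "hs s = replicate k ((1::real), (0::'a)) @ map (\<lambda>v. (0, T s v)) vs" for s
  define hs' where "hs' = replicate k ((0::real), (0::'a)) @ map (\<lambda>v. (0, gen T v)) vs"
  define y where "y s = (s, T s u0)" for s
  have lhs: "length (hs s) = k + j" for s unfolding hs_def using vs by simp
  have lhs': "length hs' = k + j" unfolding hs'_def using vs by simp
  have hs0: "hs 0 = replicate k (1, 0) @ map (\<lambda>v. (0, v)) vs" unfolding hs_def using T_0[OF grp] by simp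
  have pd0: "pd D k j 0 u0 vs = D (k + j) (0, u0) (hs 0)" unfolding pd_def hs0 ..
  have eqT: "T s (pd D k j 0 u0 vs) = D (k + j) (y s) (hs s)" for s
  proof -
    have "map (phiT T s) (hs 0) = hs s"
      unfolding hs0 hs_def by (simp add: phiT_def[OF grp] T_zero[OF grp] T_0[OF grp])
    then show ?thesis
      using tower_equiv[OF grp tw lhs[of 0], of 0 s u0] unfolding pd0 y_def by simp
  qed
  have dy: "(y has_vector_derivative (1, gen T u0)) (at 0)"
    unfolding y_def by (intro has_vector_derivative_Pair has_vector_derivative_id gen_deriv[OF grp u0])
  have dhs: "((\<lambda>s. hs s ! i) has_vector_derivative hs' ! i) (at 0)" if "i < k + j" for i
  proof (cases "i < k")
    case True
    then show ?thesis unfolding hs_def hs'_def by (simp add: nth_append zero_prod_def[symmetric])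
  next
    case False
    then have "i - k < j" using that by simp
    have "vs ! (i - k) \<in> set vs" using \<open>i - k < j\<close> vs(2) by simp
    then have m: "vs ! (i - k) \<in> Ul T (Suc 0)" using vs(1) by blast
    have "((\<lambda>s. (0::real, T s (vs ! (i - k)))) has_vector_derivative (0, gen T (vs ! (i - k)))) (at 0)"
      by (intro has_vector_derivative_Pair has_vector_derivative_const gen_deriv[OF grp m])
    then show ?thesis unfolding hs_def hs'_def using False vs \<open>i - k < j\<close>
      by (simp add: nth_append)
  qed
  have der: "((\<lambda>s. T s (pd D k j 0 u0 vs)) has_vector_derivative
     (D (Suc (k + j)) (y 0) ((1, gen T u0) # hs 0) + (\<Sum>i<k + j. D (k + j) (y 0) ((hs 0)[i := hs' ! i])))) (at 0)"
    unfolding eqT by (rule tower_chain[OF tw lhs lhs' dy dhs])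
  have y0: "y 0 = (0, u0)" unfolding y_def using T_0[OF grp] by simp
  have A: "D (Suc (k + j)) (y 0) ((1, gen T u0) # hs 0) = pd D (Suc k) j 0 u0 vs + pd D k (Suc j) 0 u0 (gen T u0 # vs)"
  proof -
    have "D (Suc (k + j)) (y 0) ((1, gen T u0) # hs 0) =
        D (Suc (k + j)) (0, u0) ((1, 0) # hs 0) + D (Suc (k + j)) (0, u0) ((0, gen T u0) # hs 0)"
      using tower_head_add[OF tw lhs[of 0], of "(0, u0)" "(1, 0)" "(0, gen T u0)"] unfolding y0 by simp
    moreover have "D (Suc (k + j)) (0, u0) ((1, 0) # hs 0) = pd D (Suc k) j 0 u0 vs"
      unfolding pd_def hs0 by simp
    moreover have "D (Suc (k + j)) (0, u0) ((0, gen T u0) # hs 0) = pd D k (Suc j) 0 u0 (gen T u0 # vs)"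
      unfolding pd_def hs0 using tower_move[OF tw, of "(0, gen T u0)" k "(1, 0)" "map (\<lambda>v. (0, v)) vs" "Suc (k + j)" "(0, u0)"] vs
      by simp
    ultimately show ?thesis by simp
  qed
  have B: "(\<Sum>i<k + j. D (k + j) (y 0) ((hs 0)[i := hs' ! i])) = (\<Sum>i<j. pd D k j 0 u0 (vs[i := gen T (vs ! i)]))"
  proof -
    have z: "(\<Sum>i<k. D (k + j) (y 0) ((hs 0)[i := hs' ! i])) = 0"
    proof (rule sum.neutral, intro ballI)
      fix i assume "i \<in> {..<k}"
      then have "i < k" by simp
      show "D (k + j) (y 0) ((hs 0)[i := hs' ! i]) = 0"
        by (rule mlin_zero[OF tower_mlin[OF tw], of _ _ i]) (use \<open>i < k\<close> lhs in \<open>auto simp: hs'_def nth_append zero_prod_def\<close>)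
    qed
    have r: "D (k + j) (y 0) ((hs 0)[k + i := hs' ! (k + i)]) = pd D k j 0 u0 (vs[i := gen T (vs ! i)])" if "i < j" for i
      unfolding pd_def hs0 hs'_def y0 using that vs by (simp add: nth_append list_update_append map_update)
    show ?thesis unfolding sum_lessThan_add_split z using r by simp
  qed
  show ?thesis using gen_eq[OF grp der] unfolding A B by simp
qed

lemma D1_bl: "bounded_linear (\<lambda>v. D (Suc 0) p [(0::real, v)])"
proof -
  have "bounded_linear (\<lambda>v::'a. (0::real, v))"
    by (intro bounded_linear_Pair bounded_linear_zero bounded_linear_ident)
  from bounded_linear_compose[OF tower_head_bl[OF tw, of "[]" 0 p] this] show ?thesis by simp
qed

lemma D1_diff: "D (Suc 0) p [(0::real, a - b)] = D (Suc 0) p [(0, a)] - D (Suc 0) p [(0, b)]"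
  using linear_diff[OF bounded_linear.linear[OF D1_bl]] .
lemma D1_scale: "D (Suc 0) p [(0::real, c *\<^sub>R a)] = c *\<^sub>R D (Suc 0) p [(0, a)]"
  using linear_scale[OF bounded_linear.linear[OF D1_bl]] .

lemma D1_equiv: "D (Suc 0) (h, T h u0) [(0, T h v)] = T h (D (Suc 0) (0, u0) [(0, v)])"
  using tower_equiv[OF grp tw, of "[(0, v)]" "Suc 0" 0 h u0] by (simp add: phiT_def[OF grp] T_zero[OF grp])

lemma y_cont: "((\<lambda>h. (h, T h u0)) \<longlongrightarrow> (0, u0)) (at 0)"
  using tendsto_Pair[OF tendsto_ident_at T_cont[OF grp, of u0 0]] T_0[OF grp] by simp

lemma Inv1:
  assumes u0: "u0 \<in> Ul T (Suc 0)" and c0: "c0 > 0" "\<And>v. c0 * norm v \<le> norm (pd D 0 1 0 u0 [v])"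
    and surj: "\<And>w. \<exists>v. pd D 0 1 0 u0 [v] = w"
    and f: "f \<in> Ul T (Suc 0)" "pd D 0 1 0 u0 [u] = f"
  shows "u \<in> Ul T (Suc 0) \<and> pd D 0 1 0 u0 [gen T u] = gen T f - pd D 1 1 0 u0 [u] - pd D 0 2 0 u0 [gen T u0, u]"
proof -
  define L where "L v = D (Suc 0) (0, u0) [(0, v)]" for v
  define \<Lambda> where "\<Lambda> h v = D (Suc 0) (h, T h u0) [(0, v)]" for h v
  have Lpd: "pd D 0 1 0 u0 [v] = L v" for v unfolding pd_def L_def by simp
  have Lf: "L u = f" using f(2) Lpd by simp
  define \<Lambda>' where "\<Lambda>' = D 2 (0, u0) [(1, gen T u0), (0, u)]"
  have dy: "((\<lambda>h. (h, T h u0)) has_vector_derivative (1, gen T u0)) (at 0)"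
    by (intro has_vector_derivative_Pair has_vector_derivative_id gen_deriv[OF grp u0])
  have dL: "((\<lambda>h. \<Lambda> h u) has_vector_derivative \<Lambda>') (at 0)"
  proof -
    have "((\<lambda>h. D (Suc 0) (h, T h u0) [(0, u)]) has_vector_derivative
      (D (Suc (Suc 0)) (0, T 0 u0) ((1, gen T u0) # [(0, u)]) + (\<Sum>i<Suc 0. D (Suc 0) (0, T 0 u0) ([(0, u)][i := [0] ! i])))) (at 0)"
      by (rule tower_chain[OF tw, where hs="\<lambda>s. [(0, u)]" and n="Suc 0" and hs'="[0]", OF _ _ dy]) auto
    moreover have "D (Suc 0) (0, u0) [0] = 0" by (rule mlin_zero[OF tower_mlin[OF tw], of _ _ 0]) auto
    ultimately show ?thesis unfolding \<Lambda>_def \<Lambda>'_def using T_0[OF grp] by (simp add: numeral_2_eq_2)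
  qed
  have \<Lambda>'eq: "\<Lambda>' = pd D 1 1 0 u0 [u] + pd D 0 2 0 u0 [gen T u0, u]"
    unfolding \<Lambda>'_def pd_def using tower_head_add[OF tw, of "[(0, u)]" "Suc 0" "(0, u0)" "(1, 0)" "(0, gen T u0)"]
    by (simp add: numeral_2_eq_2)
  define yv where "yv = gen T f - \<Lambda>'"
  obtain z where z: "L z = yv" using surj[of yv] Lpd by auto
  define q where "q h = (T h u - T 0 u) /\<^sub>R (h - 0)" for h
  define yh where "yh h = (T h f - T 0 f) /\<^sub>R (h - 0) - (\<Lambda> h u - \<Lambda> 0 u) /\<^sub>R (h - 0)" for h
  have yh_lim: "(yh \<longlongrightarrow> yv) (at 0)"
    unfolding yh_def yv_def by (intro tendsto_diff vderiv_quotientD gen_deriv[OF grp f(1)] dL)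
  have L0: "\<Lambda> 0 u = f" unfolding \<Lambda>_def using Lf T_0[OF grp] unfolding L_def by simp
  have key: "\<Lambda> h (q h) = yh h" if "h \<noteq> 0" for h
  proof -
    have "\<Lambda> h (T h u) = T h f" unfolding \<Lambda>_def using D1_equiv[of h u] Lf unfolding L_def by simp
    then show ?thesis unfolding q_def yh_def \<Lambda>_def using L0 T_0[OF grp]
      by (simp add: D1_scale D1_diff algebra_simps \<Lambda>_def)
  qed
  obtain C d where Cd: "C \<ge> 0" "d > 0" "\<And>p hs. norm (p - (0, u0)) < d \<Longrightarrow> length hs = Suc 0 \<Longrightarrow>
     norm (D (Suc 0) p hs - D (Suc 0) (0, u0) hs) \<le> C * norm (p - (0, u0)) * (\<Prod>h\<leftarrow>hs. norm h)"
    using tower_lip[OF tw, of "(0, u0)" "Suc 0"] by blast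
  define \<rho> where "\<rho> h = C * norm ((h, T h u0) - (0, u0))" for h
  have \<rho>lim: "(\<rho> \<longlongrightarrow> 0) (at 0)"
  proof -
    have "((\<lambda>h. C * norm ((h, T h u0) - (0, u0))) \<longlongrightarrow> C * norm ((0::real, u0) - (0, u0))) (at 0)"
      by (intro tendsto_mult tendsto_const tendsto_norm tendsto_diff y_cont)
    then show ?thesis unfolding \<rho>_def by simp
  qed
  have lip: "norm (L w - \<Lambda> h w) \<le> \<rho> h * norm w" if "norm ((h, T h u0) - (0, u0)) < d" for h w
    using Cd(3)[OF that, of "[(0, w)]"] unfolding L_def \<Lambda>_def \<rho>_def
    by (simp add: norm_minus_commute norm_Pair)
  define g where "g h = 2 / c0 * (\<rho> h * norm z + norm (yh h - yv))" for h
  have glim: "(g \<longlongrightarrow> 0) (at 0)"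
  proof -
    have "(g \<longlongrightarrow> 2 / c0 * (0 * norm z + norm (yv - yv))) (at 0)"
      unfolding g_def by (intro tendsto_mult tendsto_add tendsto_const \<rho>lim tendsto_norm tendsto_diff yh_lim)
    then show ?thesis by simp
  qed
  have ev1: "\<forall>\<^sub>F h in at 0. norm ((h, T h u0) - (0, u0)) < d"
    using tendsto_diff[OF y_cont tendsto_const[of "(0::real, u0)"]] Cd(2) unfolding tendsto_iff by (simp add: dist_norm)
  have ev2: "\<forall>\<^sub>F h in at 0. \<rho> h < c0 / 2" using order_tendstoD(2)[OF \<rho>lim, of "c0 / 2"] c0(1) by simp
  have ev3: "\<forall>\<^sub>F h::real in at 0. h \<noteq> 0" by (simp add: eventually_at_filter)
  have "((\<lambda>h. q h - z) \<longlongrightarrow> 0) (at 0)"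
  proof (rule Lim_null_comparison[OF _ glim])
    show "\<forall>\<^sub>F h in at 0. norm (q h - z) \<le> g h"
      using ev1 ev2 ev3
    proof eventually_elim
      case (elim h)
      have "c0 * norm (q h - z) \<le> norm (L (q h - z))" using c0(2) Lpd by simp
      also have "L (q h - z) = (L (q h) - \<Lambda> h (q h)) + (yh h - yv)"
        using key[OF elim(3)] z unfolding L_def by (simp add: D1_diff)
      finally have "c0 * norm (q h - z) \<le> norm (L (q h) - \<Lambda> h (q h)) + norm (yh h - yv)"
        by (metis norm_triangle_ineq order_trans)
      also have "norm (L (q h) - \<Lambda> h (q h)) \<le> \<rho> h * norm (q h)" by (rule lip[OF elim(1)])
      also have "\<rho> h * norm (q h) \<le> \<rho> h * (norm (q h - z) + norm z)"
      proof -
        have "\<rho> h \<ge> 0" unfolding \<rho>_def using Cd(1) by simp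
        moreover have "norm (q h) \<le> norm (q h - z) + norm z" by (metis norm_triangle_sub add.commute)
        ultimately show ?thesis by (rule mult_left_mono[rotated])
      qed
      finally have "c0 * norm (q h - z) \<le> \<rho> h * norm (q h - z) + \<rho> h * norm z + norm (yh h - yv)"
        by (simp add: algebra_simps)
      moreover have "\<rho> h * norm (q h - z) \<le> c0 / 2 * norm (q h - z)"
        using elim(2) by (intro mult_right_mono) auto
      ultimately have "c0 / 2 * norm (q h - z) \<le> \<rho> h * norm z + norm (yh h - yv)" by linarith
      then show ?case unfolding g_def using c0(1) by (simp add: field_simps)
    qed
  qed
  then have "(q \<longlongrightarrow> z) (at 0)" using tendsto_add[OF _ tendsto_const[of z]] by fastforce
  then have "((\<lambda>h. T h u) has_vector_derivative z) (at 0)" unfolding q_def by (rule vderiv_quotientI)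
  then have "u \<in> Ul T (Suc 0)" "gen T u = z" using gen_eq[OF grp] by blast+
  then show ?thesis using z Lpd \<Lambda>'eq unfolding yv_def by simp
qed

lemma U1:
  assumes F0: "Fl u0 = 0" and c0: "c0 > 0" "\<And>v. c0 * norm v \<le> norm (pd D 0 1 0 u0 [v])"
    and surj: "\<And>w. \<exists>v. pd D 0 1 0 u0 [v] = w"
  shows "u0 \<in> Ul T (Suc 0) \<and> pd D 0 1 0 u0 [gen T u0] = - pd D 1 0 0 u0 []"
proof -
  define L where "L v = D (Suc 0) (0, u0) [(0, v)]" for v
  have Lpd: "pd D 0 1 0 u0 [v] = L v" for v unfolding pd_def L_def by simp
  define m where "m = D (Suc 0) (0, u0) [(1, 0)]"
  have mpd: "pd D 1 0 0 u0 [] = m" unfolding pd_def m_def by simp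
  obtain z where z: "L z = - m" using surj[of "- m"] Lpd by auto
  define q where "q h = (T h u0 - T 0 u0) /\<^sub>R (h - 0)" for h
  have G0: "D 0 (h, T h u0) [] = 0" for h
    using tower_0[OF tw, of "(h, T h u0)"] F0 by (simp add: T_zero[OF grp] T_inv1[OF grp])
  have lin: "D (Suc 0) (0, u0) [(h, w)] = h *\<^sub>R m + L w" for h w
  proof -
    have "(h, w) = h *\<^sub>R (1::real, 0::'a) + (0, w)" by simp
    then show ?thesis unfolding m_def L_def
      using tower_head_add[OF tw, of "[]" 0 "(0, u0)" "h *\<^sub>R (1, 0)" "(0, w)"]
        tower_head_scale[OF tw, of "[]" 0 "(0, u0)" h "(1, 0)"] by simp
  qed
  have "(q \<longlongrightarrow> z) (at 0)"
    unfolding tendsto_iff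
  proof (intro allI impI)
    fix \<epsilon> :: real assume "\<epsilon> > 0"
    define e where "e = min (c0 / 2) (\<epsilon> * c0 / (4 * (1 + norm z)))"
    have e: "e > 0" "e \<le> c0 / 2" "e \<le> \<epsilon> * c0 / (4 * (1 + norm z))"
    proof -
      have "\<epsilon> * c0 / (4 * (1 + norm z)) > 0" using c0(1) \<open>\<epsilon> > 0\<close> by (simp add: add_pos_nonneg)
      then show "e > 0" using c0(1) unfolding e_def by simp
      show "e \<le> c0 / 2" unfolding e_def by (rule min.cobounded1)
      show "e \<le> \<epsilon> * c0 / (4 * (1 + norm z))" unfolding e_def by (rule min.cobounded2)
    qed
    obtain d where d: "d > 0" "\<forall>p hs. norm (p - (0, u0)) < d \<longrightarrow> length hs = 0 \<longrightarrow>
      norm (D 0 p hs - D 0 (0, u0) hs - D (Suc 0) (0, u0) ((p - (0, u0)) # hs)) \<le> e * norm (p - (0, u0)) * (\<Prod>h\<leftarrow>hs. norm h)"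
      using tower_rem[OF tw e(1), of "(0, u0)" 0] by blast
    have ev1: "\<forall>\<^sub>F h in at 0. norm ((h, T h u0) - (0, u0)) < d"
      using tendsto_diff[OF y_cont tendsto_const[of "(0::real, u0)"]] d(1) unfolding tendsto_iff by (simp add: dist_norm)
    have ev3: "\<forall>\<^sub>F h::real in at 0. h \<noteq> 0" by (simp add: eventually_at_filter)
    show "\<forall>\<^sub>F h in at 0. dist (q h) z < \<epsilon>"
      using ev1 ev3
    proof eventually_elim
      case (elim h)
      define \<Delta> where "\<Delta> = T h u0 - u0"
      have qd: "q h = \<Delta> /\<^sub>R h" unfolding q_def \<Delta>_def using T_0[OF grp] by simp
      have "norm (D 0 (h, T h u0) [] - D 0 (0, u0) [] - D (Suc 0) (0, u0) [((h, T h u0) - (0, u0))]) \<le> e * norm ((h, T h u0) - (0, u0)) * 1"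
        using d(2) elim(1) by fastforce
      then have "norm (h *\<^sub>R m + L \<Delta>) \<le> e * norm (h, \<Delta>)"
        using G0[of h] G0[of 0] T_0[OF grp] lin[of h \<Delta>] unfolding \<Delta>_def
        by (simp add: norm_minus_commute[of "- (h *\<^sub>R m)"] add.commute)
      also have "\<dots> \<le> e * (\<bar>h\<bar> + norm \<Delta>)" using norm_Pair_le[of h \<Delta>] e(1) by (intro mult_left_mono) auto
      finally have A: "norm (h *\<^sub>R m + L \<Delta>) \<le> e * (\<bar>h\<bar> + norm \<Delta>)" .
      have Lq: "L (q h - z) = (h *\<^sub>R m + L \<Delta>) /\<^sub>R h"
        unfolding qd L_def using z elim(2) unfolding L_def by (simp add: D1_diff D1_scale algebra_simps)
      have "c0 * norm (q h - z) \<le> norm (L (q h - z))" using c0(2) Lpd by simp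
      also have "\<dots> \<le> e * (\<bar>h\<bar> + norm \<Delta>) / \<bar>h\<bar>" 
      proof -
        have "norm (L (q h - z)) = norm (h *\<^sub>R m + L \<Delta>) / \<bar>h\<bar>" unfolding Lq by (simp add: divide_inverse_commute)
        also have "\<dots> \<le> e * (\<bar>h\<bar> + norm \<Delta>) / \<bar>h\<bar>" using A by (rule divide_right_mono) simp
        finally show ?thesis .
      qed
      also have "\<dots> = e * (1 + norm (q h))" unfolding qd using elim(2) by (simp add: field_simps)
      also have "\<dots> \<le> e * (1 + norm z + norm (q h - z))"
        using e(1) norm_triangle_sub[of "q h" z] by (intro mult_left_mono) (auto simp: norm_minus_commute)
      finally have B: "c0 * norm (q h - z) \<le> e * (1 + norm z) + e * norm (q h - z)" by (simp add: algebra_simps)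
      have "e * norm (q h - z) \<le> c0 / 2 * norm (q h - z)" using e(2) by (intro mult_right_mono) auto
      with B have "c0 / 2 * norm (q h - z) \<le> e * (1 + norm z)" by linarith
      also have "\<dots> \<le> \<epsilon> * c0 / (4 * (1 + norm z)) * (1 + norm z)" using e(3) by (intro mult_right_mono) auto
      also have "\<dots> = \<epsilon> * c0 / 4"
      proof -
        have "1 + norm z > 0" by (simp add: add_pos_nonneg)
        then show ?thesis by (simp add: field_simps)
      qed
      finally have "norm (q h - z) \<le> \<epsilon> / 2" using c0(1) by (simp add: field_simps)
      then show ?case using \<open>\<epsilon> > 0\<close> by (simp add: dist_norm)
    qed
  qed
  then have "((\<lambda>h. T h u0) has_vector_derivative z) (at 0)" unfolding q_def by (rule vderiv_quotientI)
  then have "u0 \<in> Ul T (Suc 0)" "gen T u0 = z" using gen_eq[OF grp] by blast+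
  then show ?thesis using z Lpd mpd by simp
qed

end


lemma fred_surj:
  fixes L :: "'a::real_normed_vector \<Rightarrow> 'a"
  assumes "fredholm_index0 L" "c0 > 0" "\<And>u. c0 * norm u \<le> norm (L u)"
  shows "surj L"
proof -
  obtain B C where BC: "finite B" "independent B" "span B = {x. L x = 0}" "finite C" "independent C"
    "card C = card B" "range L \<inter> span C = {0}" "{x + y |x y. x \<in> range L \<and> y \<in> span C} = UNIV"
    using assms(1) unfolding fredholm_index0_def by blast
  have ker: "L x = 0 \<Longrightarrow> x = 0" for x using assms(2) assms(3)[of x] by (simp add: mult_le_0_iff)
  have "B \<subseteq> {0}" using span_superset[of B] BC(3) ker by auto
  moreover have "0 \<notin> B" using BC(2) dependent_zero by blast
  ultimately have "B = {}" by auto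
  then have "C = {}" using BC(4,6) by simp
  then have "{x + y |x y. x \<in> range L \<and> y \<in> {0}} = UNIV" using BC(8) by simp
  then show ?thesis by auto
qed

lemma prod_list_le_nth:
  fixes xs ys :: "real list"
  assumes "length xs = length ys" "\<And>i. i < length xs \<Longrightarrow> 0 \<le> xs ! i \<and> xs ! i \<le> ys ! i"
  shows "prod_list xs \<le> prod_list ys"
  using assms
proof (induction xs arbitrary: ys)
  case Nil then show ?case by simp
next
  case (Cons x xs)
  then obtain y ys' where ys: "ys = y # ys'" by (cases ys) auto
  have h: "0 \<le> x" "x \<le> y" using Cons.prems(2)[of 0] ys by auto
  have p: "0 \<le> xs ! i \<and> xs ! i \<le> ys' ! i" if "i < length xs" for i
    using Cons.prems(2)[of "Suc i"] that ys by simp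
  have t: "prod_list xs \<le> prod_list ys'"
    using Cons.prems(1) ys p by (intro Cons.IH) auto
  have t0: "0 \<le> prod_list xs" using p by (intro prod_list_nonneg) (auto simp: in_set_conv_nth)
  have "0 \<le> y" using h by simp
  show ?case unfolding ys using mult_mono[OF h(2) t \<open>0 \<le> y\<close> t0] by simp
qed


theorem lemma2p11:
  fixes T :: "real \<Rightarrow> 'a::banach \<Rightarrow> 'a"
    and F :: "real \<Rightarrow> 'a \<Rightarrow> 'a"
    and DF :: "real \<Rightarrow> nat \<Rightarrow> real \<times> 'a \<Rightarrow> (real \<times> 'a) list \<Rightarrow> 'a"
    and \<epsilon>0 :: real and u0 :: 'a
  defines "I \<equiv> {-\<epsilon>0..\<epsilon>0}"
  defines "calF \<equiv> (\<lambda>lam s u. T s (F lam (T (-s) u)))"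
  defines "dF \<equiv> (\<lambda>lam u v. pd (DF lam) 0 1 0 u [v])"
  assumes grp: "sc_group T"
    and eps: "\<epsilon>0 > 0"
    and F0: "F 0 u0 = 0"
    and A1: "\<forall>lam\<in>I. Cinf_tower (\<lambda>(s, u). calF lam s u) (DF lam)"
    and A2: "\<forall>j k l u us. u \<in> Ul T l \<and> length us = j \<and> set us \<subseteq> Ul T l \<longrightarrow>
               Ck_on I l (\<lambda>lam. pd (DF lam) k j 0 u us)"
    and A3: "\<forall>j k l. \<exists>c>0. \<forall>lam\<in>I. \<forall>u us.
               u \<in> Ul T l \<and> norm_l T l (u - u0) \<le> 1 \<and> length us = j \<and> set us \<subseteq> Ul T l \<longrightarrow>
               norm (lderiv I l (\<lambda>mu. pd (DF mu) k j 0 u us) lam)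
                 \<le> c * (\<Prod>v\<leftarrow>us. norm_l T l v)"
    and A4: "\<exists>c0>0. \<forall>lam\<in>I. fredholm_index0 (dF lam u0) \<and>
               (\<forall>u. norm (dF lam u0 u) \<ge> c0 * norm u)"
  shows "\<forall>l. \<exists>cl>0. \<forall>lam\<in>I. \<forall>f\<in>Ul T l.
           inv (dF lam u0) f \<in> Ul T l \<and>
           norm_l T l (inv (dF lam u0) f) \<le> cl * norm_l T l f"

proof -
  obtain c0 where c0: "c0 > 0" "\<forall>lam\<in>I. fredholm_index0 (dF lam u0) \<and> (\<forall>u. norm (dF lam u0 u) \<ge> c0 * norm u)"
    using A4 by blast
  have dFpd: "dF lam u0 v = pd (DF lam) 0 1 0 u0 [v]" for lam v unfolding dF_def ..
  have ES: "eqsetting T (F lam) (DF lam)" if "lam \<in> I" for lam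
    unfolding eqsetting_def using grp A1 that unfolding calF_def by auto
  have lb: "c0 * norm v \<le> norm (pd (DF lam) 0 1 0 u0 [v])" if "lam \<in> I" for lam v
    using c0(2) that dFpd by auto
  have lb': "c0 * norm v \<le> norm (dF lam u0 v)" if "lam \<in> I" for lam v
    using c0(2) that by auto
  have blL: "bounded_linear (dF lam u0)" if "lam \<in> I" for lam
    using c0(2) that unfolding fredholm_index0_def by auto
  have surjL: "surj (dF lam u0)" if "lam \<in> I" for lam
    using fred_surj[of "dF lam u0" c0] c0 that by auto
  have ex: "\<exists>v. pd (DF lam) 0 1 0 u0 [v] = w" if "lam \<in> I" for lam w
    using surjL[OF that] dFpd by (metis surjD)
  have injL: "inj (dF lam u0)" if "lam \<in> I" for lam
  proof (rule injI)
    fix a b assume "dF lam u0 a = dF lam u0 b"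
    then have "dF lam u0 (a - b) = 0"
      using linear_diff[OF bounded_linear.linear[OF blL[OF that]]] by simp
    then have "c0 * norm (a - b) \<le> 0" using lb'[OF that, of "a - b"] by simp
    then show "a = b" using c0(1) by (simp add: mult_le_0_iff)
  qed
  have finv: "dF lam u0 (inv (dF lam u0) f) = f" if "lam \<in> I" for lam f
    using surjL[OF that] by (rule surj_f_inv_f)
  have invf: "inv (dF lam u0) (dF lam u0 x) = x" if "lam \<in> I" for lam x
    using injL[OF that] by (rule inv_f_f)
  have inv_bound: "norm (inv (dF lam u0) f) \<le> (1 / c0) * norm f" if "lam \<in> I" for lam f
    using lb'[OF that, of "inv (dF lam u0) f"] finv[OF that, of f] c0(1) by (simp add: field_simps)
  have I0: "0 \<in> I" unfolding I_def using eps by simp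
  define P where "P l \<longleftrightarrow> u0 \<in> Ul T l \<and>
      (\<forall>k j. \<exists>C>0. \<forall>lam\<in>I. \<forall>vs. set vs \<subseteq> Ul T l \<and> length vs = j \<longrightarrow>
          pd (DF lam) k j 0 u0 vs \<in> Ul T l \<and> norm_l T l (pd (DF lam) k j 0 u0 vs) \<le> C * (\<Prod>v\<leftarrow>vs. norm_l T l v)) \<and>
      (\<exists>C>0. \<forall>lam\<in>I. \<forall>f\<in>Ul T l. inv (dF lam u0) f \<in> Ul T l \<and> norm_l T l (inv (dF lam u0) f) \<le> C * norm_l T l f)" for l
  have "P l" for l
  proof (induction l)
    case 0
    have R0: "\<exists>C>0. \<forall>lam\<in>I. \<forall>vs. set vs \<subseteq> Ul T 0 \<and> length vs = j \<longrightarrow>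
          pd (DF lam) k j 0 u0 vs \<in> Ul T 0 \<and> norm_l T 0 (pd (DF lam) k j 0 u0 vs) \<le> C * (\<Prod>v\<leftarrow>vs. norm_l T 0 v)" for k j
    proof -
      obtain c where c: "c > 0" "\<forall>lam\<in>I. \<forall>u us.
               u \<in> Ul T 0 \<and> norm_l T 0 (u - u0) \<le> 1 \<and> length us = j \<and> set us \<subseteq> Ul T 0 \<longrightarrow>
               norm (lderiv I 0 (\<lambda>mu. pd (DF mu) k j 0 u us) lam) \<le> c * (\<Prod>v\<leftarrow>us. norm_l T 0 v)"
        using A3 by blast
      show ?thesis
      proof (intro exI[of _ c] conjI ballI allI impI)
        fix lam vs assume lam: "lam \<in> I" and vs: "set vs \<subseteq> Ul T 0 \<and> length vs = j"
        show "pd (DF lam) k j 0 u0 vs \<in> Ul T 0" by simp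
        have "norm (lderiv I 0 (\<lambda>mu. pd (DF mu) k j 0 u0 vs) lam) \<le> c * (\<Prod>v\<leftarrow>vs. norm_l T 0 v)"
        proof -
          have "norm_l T 0 (u0 - u0) \<le> 1" by (simp add: norm_l_def)
          then show ?thesis using c(2)[rule_format, of lam u0 vs] lam vs by simp
        qed
        then show "norm_l T 0 (pd (DF lam) k j 0 u0 vs) \<le> c * (\<Prod>v\<leftarrow>vs. norm_l T 0 v)"
          by (simp add: lderiv_def norm_l_def)
      qed (use c in auto)
    qed
    have Inv0: "\<exists>C>0. \<forall>lam\<in>I. \<forall>f\<in>Ul T 0. inv (dF lam u0) f \<in> Ul T 0 \<and> norm_l T 0 (inv (dF lam u0) f) \<le> C * norm_l T 0 f"
      using inv_bound c0(1) by (intro exI[of _ "1 / c0"]) (auto simp: norm_l_def)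
    show ?case unfolding P_def using R0 Inv0 by simp
  next
    case (Suc l)
    have Uu0: "u0 \<in> Ul T l" using Suc.IH unfolding P_def by blast
    have R: "\<exists>C>0. \<forall>lam\<in>I. \<forall>vs. set vs \<subseteq> Ul T l \<and> length vs = j \<longrightarrow>
          pd (DF lam) k j 0 u0 vs \<in> Ul T l \<and> norm_l T l (pd (DF lam) k j 0 u0 vs) \<le> C * (\<Prod>v\<leftarrow>vs. norm_l T l v)" for k j
      using Suc.IH unfolding P_def by blast
    obtain Ci where Ci: "Ci > 0" "\<And>lam f. lam \<in> I \<Longrightarrow> f \<in> Ul T l \<Longrightarrow> inv (dF lam u0) f \<in> Ul T l \<and> norm_l T l (inv (dF lam u0) f) \<le> Ci * norm_l T l f"
      using Suc.IH unfolding P_def by blast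
    have U: "u0 \<in> Ul T (Suc 0) \<and> pd (DF 0) 0 1 0 u0 [gen T u0] = - pd (DF 0) 1 0 0 u0 []"
      by (rule eqsetting.U1[OF ES[OF I0] F0 c0(1) lb[OF I0] ex[OF I0]])
    have u01: "u0 \<in> Ul T (Suc 0)" using U by blast
    have gu0: "gen T u0 = inv (dF 0 u0) (- pd (DF 0) 1 0 0 u0 [])"
      using invf[OF I0, of "gen T u0"] U dFpd by simp
    have M10: "pd (DF 0) 1 0 0 u0 [] \<in> Ul T l"
      using R[where k=1 and j=0] I0 by fastforce
    have "- pd (DF 0) 1 0 0 u0 [] \<in> Ul T l" using Ul_scale[OF grp M10, of "-1"] by simp
    then have gu0l: "gen T u0 \<in> Ul T l" unfolding gu0 using Ci(2)[OF I0] by blast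
    have Uu0': "u0 \<in> Ul T (Suc l)" using Ul_Suc_iff[OF grp] u01 gu0l by blast
    define a where "a = norm_l T l (gen T u0)"
    have a0: "a \<ge> 0" unfolding a_def by (rule norm_l_nonneg[OF grp])
    have RS: "\<exists>C>0. \<forall>lam\<in>I. \<forall>vs. set vs \<subseteq> Ul T (Suc l) \<and> length vs = j \<longrightarrow>
          pd (DF lam) k j 0 u0 vs \<in> Ul T (Suc l) \<and> norm_l T (Suc l) (pd (DF lam) k j 0 u0 vs) \<le> C * (\<Prod>v\<leftarrow>vs. norm_l T (Suc l) v)" for k j
    proof -
      obtain C1 where C1: "C1 > 0" "\<And>lam vs. lam \<in> I \<Longrightarrow> set vs \<subseteq> Ul T l \<Longrightarrow> length vs = j \<Longrightarrow>
          pd (DF lam) (Suc k) j 0 u0 vs \<in> Ul T l \<and> norm_l T l (pd (DF lam) (Suc k) j 0 u0 vs) \<le> C1 * (\<Prod>v\<leftarrow>vs. norm_l T l v)"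
        using R[where k="Suc k" and j=j] by blast
      obtain C2 where C2: "C2 > 0" "\<And>lam vs. lam \<in> I \<Longrightarrow> set vs \<subseteq> Ul T l \<Longrightarrow> length vs = Suc j \<Longrightarrow>
          pd (DF lam) k (Suc j) 0 u0 vs \<in> Ul T l \<and> norm_l T l (pd (DF lam) k (Suc j) 0 u0 vs) \<le> C2 * (\<Prod>v\<leftarrow>vs. norm_l T l v)"
        using R[where k=k and j="Suc j"] by blast
      obtain C3 where C3: "C3 > 0" "\<And>lam vs. lam \<in> I \<Longrightarrow> set vs \<subseteq> Ul T l \<Longrightarrow> length vs = j \<Longrightarrow>
          pd (DF lam) k j 0 u0 vs \<in> Ul T l \<and> norm_l T l (pd (DF lam) k j 0 u0 vs) \<le> C3 * (\<Prod>v\<leftarrow>vs. norm_l T l v)"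
        using R[where k=k and j=j] by blast
      define C where "C = C3 + C1 + C2 * a + real j * C3"
      have "C > 0" unfolding C_def using C1(1) C2(1) C3(1) a0 by (simp add: add_pos_nonneg)
      moreover have "pd (DF lam) k j 0 u0 vs \<in> Ul T (Suc l) \<and> norm_l T (Suc l) (pd (DF lam) k j 0 u0 vs) \<le> C * (\<Prod>v\<leftarrow>vs. norm_l T (Suc l) v)"
        if lam: "lam \<in> I" and vs: "set vs \<subseteq> Ul T (Suc l)" "length vs = j" for lam vs
      proof -
        have vs1: "set vs \<subseteq> Ul T (Suc 0)" using vs(1) Ul_Suc_iff[OF grp] by blast
        have vsl: "set vs \<subseteq> Ul T l" using vs(1) Ul_mono[OF grp, of l "Suc l"] by auto
        have gvs: "gen T (vs ! i) \<in> Ul T l" if "i < j" for i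
          using vs that Ul_Suc_iff[OF grp] nth_mem by blast
        define P0 where "P0 = (\<Prod>v\<leftarrow>vs. norm_l T l v)"
        define P1 where "P1 = (\<Prod>v\<leftarrow>vs. norm_l T (Suc l) v)"
        have P0P1: "P0 \<le> P1" unfolding P0_def P1_def
          by (rule prod_list_le_nth) (auto simp: norm_l_nonneg[OF grp] norm_l_mono1[OF grp])
        have P00: "P0 \<ge> 0" unfolding P0_def by (rule prod_list_nonneg) (auto simp: norm_l_nonneg[OF grp])
        define M where "M = pd (DF lam) k j 0 u0 vs"
        define M1 where "M1 = pd (DF lam) (Suc k) j 0 u0 vs"
        define M2 where "M2 = pd (DF lam) k (Suc j) 0 u0 (gen T u0 # vs)"
        define Mi where "Mi i = pd (DF lam) k j 0 u0 (vs[i := gen T (vs ! i)])" for i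
        have RD: "M \<in> Ul T (Suc 0) \<and> gen T M = M1 + M2 + (\<Sum>i<j. Mi i)"
          unfolding M_def M1_def M2_def Mi_def by (rule eqsetting.RD[OF ES[OF lam] u01 vs1 vs(2)])
        have hM: "M \<in> Ul T l" "norm_l T l M \<le> C3 * P0" using C3(2)[OF lam vsl vs(2)] unfolding M_def P0_def by auto
        have hM1: "M1 \<in> Ul T l" "norm_l T l M1 \<le> C1 * P0" using C1(2)[OF lam vsl vs(2)] unfolding M1_def P0_def by auto
        have hM2: "M2 \<in> Ul T l" "norm_l T l M2 \<le> C2 * (a * P0)"
          using C2(2)[OF lam _, of "gen T u0 # vs"] vsl gu0l vs(2) unfolding M2_def P0_def a_def by auto
        have hMi: "Mi i \<in> Ul T l \<and> norm_l T l (Mi i) \<le> C3 * P1" if "i < j" for i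
        proof -
          have s: "set (vs[i := gen T (vs ! i)]) \<subseteq> Ul T l"
            using set_update_subset_insert[of vs i "gen T (vs ! i)"] vsl gvs[OF that] by auto
          have "(\<Prod>v\<leftarrow>vs[i := gen T (vs ! i)]. norm_l T l v) \<le> P1" unfolding P1_def
          proof (rule prod_list_le_nth)
            fix i' assume "i' < length (map (norm_l T l) (vs[i := gen T (vs ! i)]))"
            then have "i' < j" using vs(2) by simp
            show "0 \<le> map (norm_l T l) (vs[i := gen T (vs ! i)]) ! i' \<and>
                map (norm_l T l) (vs[i := gen T (vs ! i)]) ! i' \<le> map (norm_l T (Suc l)) vs ! i'"
              using \<open>i' < j\<close> vs(2) norm_l_mono1[OF grp, of l "vs ! i'"] norm_l_Suc[OF grp, of l "vs ! i'"]
              by (cases "i' = i") (auto simp: norm_l_nonneg[OF grp] nth_list_update)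
          qed (use vs in auto)
          then have "C3 * (\<Prod>v\<leftarrow>vs[i := gen T (vs ! i)]. norm_l T l v) \<le> C3 * P1"
            using C3(1) by (intro mult_left_mono) auto
          then show ?thesis using C3(2)[OF lam s] vs(2) unfolding Mi_def by auto
        qed
        have gM: "gen T M \<in> Ul T l" unfolding RD[THEN conjunct2]
          using hM1 hM2 hMi by (intro Ul_add[OF grp] Ul_sum[OF grp]) auto
        have MS: "M \<in> Ul T (Suc l)" using RD gM Ul_Suc_iff[OF grp] by blast
        have "norm_l T l (gen T M) \<le> norm_l T l (M1 + M2) + norm_l T l (\<Sum>i<j. Mi i)"
          unfolding RD[THEN conjunct2] using hM1 hM2 hMi
          by (intro norm_l_add[OF grp] Ul_add[OF grp] Ul_sum[OF grp]) auto
        also have "\<dots> \<le> (norm_l T l M1 + norm_l T l M2) + (\<Sum>i<j. norm_l T l (Mi i))"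
          using hM1 hM2 hMi by (intro add_mono norm_l_add[OF grp] norm_l_sum[OF grp]) auto
        also have "\<dots> \<le> (C1 * P0 + C2 * (a * P0)) + (\<Sum>i<j. C3 * P1)"
          using hM1 hM2 hMi by (intro add_mono sum_mono) auto
        finally have g: "norm_l T l (gen T M) \<le> C1 * P0 + C2 * (a * P0) + real j * C3 * P1" by simp
        have "norm M \<le> C3 * P0" using norm_le_norm_l[OF grp, of M l] hM by linarith
        then have "norm_l T (Suc l) M \<le> C3 * P0 + C1 * P0 + C2 * (a * P0) + real j * C3 * P1"
          unfolding norm_l_Suc[OF grp] using g by linarith
        also have "\<dots> \<le> C3 * P1 + C1 * P1 + C2 * (a * P1) + real j * C3 * P1"
          using P0P1 C1(1) C2(1) C3(1) a0 by (intro add_mono mult_left_mono) auto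
        also have "\<dots> = C * P1" unfolding C_def by (simp add: algebra_simps)
        finally show ?thesis using MS unfolding M_def P1_def by simp
      qed
      ultimately show ?thesis by blast
    qed
    have InvS: "\<exists>C>0. \<forall>lam\<in>I. \<forall>f\<in>Ul T (Suc l). inv (dF lam u0) f \<in> Ul T (Suc l) \<and>
        norm_l T (Suc l) (inv (dF lam u0) f) \<le> C * norm_l T (Suc l) f"
    proof -
      obtain E1 where E1: "E1 > 0" "\<And>lam vs. lam \<in> I \<Longrightarrow> set vs \<subseteq> Ul T l \<Longrightarrow> length vs = 1 \<Longrightarrow>
          pd (DF lam) 1 1 0 u0 vs \<in> Ul T l \<and> norm_l T l (pd (DF lam) 1 1 0 u0 vs) \<le> E1 * (\<Prod>v\<leftarrow>vs. norm_l T l v)"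
        using R[where k=1 and j=1] by blast
      obtain E2 where E2: "E2 > 0" "\<And>lam vs. lam \<in> I \<Longrightarrow> set vs \<subseteq> Ul T l \<Longrightarrow> length vs = 2 \<Longrightarrow>
          pd (DF lam) 0 2 0 u0 vs \<in> Ul T l \<and> norm_l T l (pd (DF lam) 0 2 0 u0 vs) \<le> E2 * (\<Prod>v\<leftarrow>vs. norm_l T l v)"
        using R[where k=0 and j=2] by blast
      define C where "C = 1 / c0 + Ci * (1 + (E1 + E2 * a) * Ci)"
      have "C > 0" unfolding C_def using c0(1) Ci(1) E1(1) E2(1) a0 by (simp add: add_pos_nonneg)
      moreover have "inv (dF lam u0) f \<in> Ul T (Suc l) \<and> norm_l T (Suc l) (inv (dF lam u0) f) \<le> C * norm_l T (Suc l) f"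
        if lam: "lam \<in> I" and f: "f \<in> Ul T (Suc l)" for lam f
      proof -
        define u where "u = inv (dF lam u0) f"
        have Lu: "pd (DF lam) 0 1 0 u0 [u] = f" using finv[OF lam, of f] dFpd unfolding u_def by simp
        have f1: "f \<in> Ul T (Suc 0)" "gen T f \<in> Ul T l" using f Ul_Suc_iff[OF grp] by blast+
        have fl: "f \<in> Ul T l" using f Ul_mono[OF grp, of l "Suc l"] by auto
        define N where "N = norm_l T (Suc l) f"
        have N: "N = norm f + norm_l T l (gen T f)" unfolding N_def by (rule norm_l_Suc[OF grp])
        have fN: "norm_l T l f \<le> N" unfolding N_def by (rule norm_l_mono1[OF grp])
        have I1: "u \<in> Ul T (Suc 0) \<and> pd (DF lam) 0 1 0 u0 [gen T u] =
            gen T f - pd (DF lam) 1 1 0 u0 [u] - pd (DF lam) 0 2 0 u0 [gen T u0, u]"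
          by (rule eqsetting.Inv1[OF ES[OF lam] u01 c0(1) lb[OF lam] ex[OF lam] f1(1) Lu])
        define w where "w = gen T f - pd (DF lam) 1 1 0 u0 [u] - pd (DF lam) 0 2 0 u0 [gen T u0, u]"
        have gu: "gen T u = inv (dF lam u0) w" using invf[OF lam, of "gen T u"] I1 dFpd unfolding w_def by simp
        have ul: "u \<in> Ul T l" "norm_l T l u \<le> Ci * norm_l T l f" using Ci(2)[OF lam fl] unfolding u_def by auto
        have h1: "pd (DF lam) 1 1 0 u0 [u] \<in> Ul T l" "norm_l T l (pd (DF lam) 1 1 0 u0 [u]) \<le> E1 * norm_l T l u"
          using E1(2)[OF lam, of "[u]"] ul by auto
        have h2: "pd (DF lam) 0 2 0 u0 [gen T u0, u] \<in> Ul T l" "norm_l T l (pd (DF lam) 0 2 0 u0 [gen T u0, u]) \<le> E2 * (a * norm_l T l u)"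
          using E2(2)[OF lam, of "[gen T u0, u]"] ul gu0l unfolding a_def by auto
        have wl: "w \<in> Ul T l" unfolding w_def using f1 h1 h2 by (intro Ul_diff[OF grp]) auto
        have "norm_l T l w \<le> norm_l T l (gen T f - pd (DF lam) 1 1 0 u0 [u]) + norm_l T l (pd (DF lam) 0 2 0 u0 [gen T u0, u])"
          unfolding w_def using f1 h1 h2 by (intro norm_l_diff[OF grp] Ul_diff[OF grp]) auto
        also have "\<dots> \<le> (norm_l T l (gen T f) + norm_l T l (pd (DF lam) 1 1 0 u0 [u])) + norm_l T l (pd (DF lam) 0 2 0 u0 [gen T u0, u])"
          using f1 h1 by (intro add_mono norm_l_diff[OF grp]) auto
        also have "\<dots> \<le> (norm_l T l (gen T f) + E1 * norm_l T l u) + E2 * (a * norm_l T l u)"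
          using h1 h2 by (intro add_mono) auto
        finally have wb: "norm_l T l w \<le> norm_l T l (gen T f) + (E1 + E2 * a) * norm_l T l u"
          by (simp add: algebra_simps)
        have gul: "gen T u \<in> Ul T l" "norm_l T l (gen T u) \<le> Ci * norm_l T l w" using Ci(2)[OF lam wl] gu by auto
        have uS: "u \<in> Ul T (Suc l)" using I1 gul(1) Ul_Suc_iff[OF grp] by blast
        have nu: "norm u \<le> 1 / c0 * norm f" unfolding u_def by (rule inv_bound[OF lam])
        have EA: "E1 + E2 * a \<ge> 0" using E1(1) E2(1) a0 by simp
        have "(E1 + E2 * a) * norm_l T l u \<le> (E1 + E2 * a) * (Ci * N)"
        proof -
          have "norm_l T l u \<le> Ci * N" using ul(2) fN Ci(1) by (meson mult_left_mono order_trans less_imp_le)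
          then show ?thesis using EA by (rule mult_left_mono)
        qed
        then have "norm_l T l w \<le> norm_l T l (gen T f) + (E1 + E2 * a) * (Ci * N)" using wb by linarith
        then have "Ci * norm_l T l w \<le> Ci * (norm_l T l (gen T f) + (E1 + E2 * a) * (Ci * N))"
          using Ci(1) by (intro mult_left_mono) auto
        then have gb: "norm_l T l (gen T u) \<le> Ci * (norm_l T l (gen T f) + (E1 + E2 * a) * (Ci * N))"
          using gul(2) by linarith
        have "norm_l T (Suc l) u \<le> 1 / c0 * norm f + Ci * (norm_l T l (gen T f) + (E1 + E2 * a) * (Ci * N))"
          unfolding norm_l_Suc[OF grp] using nu gb by linarith
        also have "\<dots> \<le> 1 / c0 * N + Ci * (N + (E1 + E2 * a) * (Ci * N))"
        proof -
          have "norm f \<le> N" "norm_l T l (gen T f) \<le> N" using N norm_l_nonneg[OF grp, of l "gen T f"] by auto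
          then show ?thesis using c0(1) Ci(1) EA by (intro add_mono mult_left_mono) auto
        qed
        also have "\<dots> = C * N" unfolding C_def by (simp add: algebra_simps)
        finally show ?thesis using uS unfolding u_def N_def by simp
      qed
      ultimately show ?thesis by blast
    qed
    show ?case unfolding P_def using Uu0' RS InvS by blast
  qed
  then show ?thesis unfolding P_def by blast
qed


end
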